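(* Let $\mathcal{H}$ be a separable Hilbert space and let $a_j\in B(\mathcal{H})$ ($j=1,2,\dots$) satisfy $\sum_{j=1}^\infty a_j^*a_j=1=\sum_{j=1}^\infty a_ja_j^*$, the sums converging in the weak* (equivalently strong) operator topology. Let $a=(a_j)$ denote the corresponding bounded column operator $\mathcal{H}\to\mathcal{H}^\infty$, and define $\Psi:B(\mathcal{H})\to B(\mathcal{H})$ by $\Psi(x)=\sum_j a_j^*xa_j=a^*x^{(\infty)}a$, where $x^{(\infty)}$ is the block-diagonal operator on $\mathcal{H}^\infty$ with $x$ in each diagonal entry. Then: (i) $\Psi(C^2(\mathcal{H}))\subseteq C^2(\mathcal{H})$ and the restriction $\Phi:=\Psi|_{C^2(\mathcal{H})}$ satisfies $\|\Phi(x)\|_2\le\|x\|_2$ for all $x\in C^2(\mathcal{H})$. (ii) For all $x\in C^2(\mathcal{H})$, $\|ax-x^{(\infty)}a\|_2^2\le 2\|x-\Phi(x)\|_2\|x\|_2$ and $\|\Phi(x)-x\|_2\le\|ax-x^{(\infty)}a\|_2$. (iii) The operator $\Phi-1$ on the Hilbert space $C^2(\mathcal{H})$ is not invertible if and only if there exists a sequence of selfadjoint $x_k\in C^2(\mathcal{H})$ with $\|x_k\|_2=1$ and $\lim_{k\to\infty}\|\Phi(x_k)-x_k\|_2=0$.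
   Context: $C^2(\mathcal{H})$ denotes the Hilbert–Schmidt operators on $\mathcal{H}$ with norm $\|x\|_2=\sqrt{\mathrm{tr}(x^*x)}$; for an operator $\mathcal{H}\to\mathcal{H}^\infty$ (such as $ax-x^{(\infty)}a$), $\|\cdot\|_2$ likewise denotes the Hilbert–Schmidt norm (possibly $+\infty$). $\mathcal{H}^\infty$ is the Hilbert direct sum of countably many copies of $\mathcal{H}$. *)

theory Defs
  imports "HOL-Analysis.Analysis"
begin

text \<open>Model: a (nonzero) separable complex Hilbert space is identified with
  l2('i) for a countable index type 'i (orthonormal basis indexed by 'i).
  Vectors are functions 'i => complex, bounded operators are given by their
  matrices w.r.t. this basis, of type 'i => 'i => complex (row, column).\<close>

definition ell2 :: "('i \<Rightarrow> complex) \<Rightarrow> bool" where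
  "ell2 v \<longleftrightarrow> (\<lambda>i. (cmod (v i))^2) summable_on UNIV"

definition l2norm :: "('i \<Rightarrow> complex) \<Rightarrow> real" where
  "l2norm v = sqrt (\<Sum>\<^sub>\<infinity>i. (cmod (v i))^2)"

definition mat_apply :: "('r \<Rightarrow> 'c \<Rightarrow> complex) \<Rightarrow> ('c \<Rightarrow> complex) \<Rightarrow> 'r \<Rightarrow> complex" where
  "mat_apply A v i = (\<Sum>\<^sub>\<infinity>j. A i j * v j)"

definition mat_mult :: "('r \<Rightarrow> 'm \<Rightarrow> complex) \<Rightarrow> ('m \<Rightarrow> 'c \<Rightarrow> complex) \<Rightarrow> 'r \<Rightarrow> 'c \<Rightarrow> complex" where
  "mat_mult A B i k = (\<Sum>\<^sub>\<infinity>j. A i j * B j k)"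

definition adj :: "('r \<Rightarrow> 'c \<Rightarrow> complex) \<Rightarrow> 'c \<Rightarrow> 'r \<Rightarrow> complex" where
  "adj A i j = cnj (A j i)"

definition bounded_mat :: "('i \<Rightarrow> 'i \<Rightarrow> complex) \<Rightarrow> bool" where
  "bounded_mat A \<longleftrightarrow>
     (\<forall>v. ell2 v \<longrightarrow> (\<forall>i. (\<lambda>j. A i j * v j) summable_on UNIV) \<and> ell2 (mat_apply A v)) \<and>
     (\<exists>C. \<forall>v. ell2 v \<longrightarrow> l2norm (mat_apply A v) \<le> C * l2norm v)"

definition hs2 :: "('r \<Rightarrow> 'c \<Rightarrow> complex) \<Rightarrow> ennreal" where
  "hs2 M = (\<Sum>\<^sub>\<infinity>p. ennreal ((cmod (M (fst p) (snd p)))^2))"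

definition hs_norm :: "('r \<Rightarrow> 'c \<Rightarrow> complex) \<Rightarrow> real" where
  "hs_norm M = sqrt (enn2real (hs2 M))"

definition is_HS :: "('i \<Rightarrow> 'i \<Rightarrow> complex) \<Rightarrow> bool" where
  "is_HS M \<longleftrightarrow> hs2 M < \<infinity>"

definition Psi :: "(nat \<Rightarrow> 'i \<Rightarrow> 'i \<Rightarrow> complex) \<Rightarrow> ('i \<Rightarrow> 'i \<Rightarrow> complex) \<Rightarrow> 'i \<Rightarrow> 'i \<Rightarrow> complex" where
  "Psi a x i k = (\<Sum>j. mat_mult (adj (a j)) (mat_mult x (a j)) i k)"

text \<open>The operator a x - x^(\<infinity>) a : H \<rightarrow> H^\<infinity>, matrix with rows indexed by nat \<times> 'i.\<close>
definition commut :: "(nat \<Rightarrow> 'i \<Rightarrow> 'i \<Rightarrow> complex) \<Rightarrow> ('i \<Rightarrow> 'i \<Rightarrow> complex) \<Rightarrow> nat \<times> 'i \<Rightarrow> 'i \<Rightarrow> complex" where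
  "commut a x p k = mat_mult (a (fst p)) x (snd p) k - mat_mult x (a (fst p)) (snd p) k"

definition sot_sum_id :: "(nat \<Rightarrow> 'i \<Rightarrow> 'i \<Rightarrow> complex) \<Rightarrow> bool" where
  "sot_sum_id T \<longleftrightarrow> (\<forall>v. ell2 v \<longrightarrow>
     (\<lambda>n. l2norm (\<lambda>i. mat_apply (\<lambda>r c. \<Sum>j<n. T j r c) v i - v i)) \<longlonglongrightarrow> 0)"

definition HS_invertible :: "(('i \<Rightarrow> 'i \<Rightarrow> complex) \<Rightarrow> ('i \<Rightarrow> 'i \<Rightarrow> complex)) \<Rightarrow> bool" where
  "HS_invertible F \<longleftrightarrow> (\<exists>G. (\<forall>y. is_HS y \<longrightarrow> is_HS (G y)) \<and>
     (\<forall>x. is_HS x \<longrightarrow> G (F x) = x) \<and> (\<forall>y. is_HS y \<longrightarrow> F (G y) = y) \<and>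
     (\<exists>C. \<forall>y. is_HS y \<longrightarrow> hs_norm (G y) \<le> C * hs_norm y))"

end

theory Submission
  imports Defs
begin

definition cinner :: "('i \<Rightarrow> complex) \<Rightarrow> ('i \<Rightarrow> complex) \<Rightarrow> complex" where
  "cinner u v = (\<Sum>\<^sub>\<infinity>i. cnj (u i) * v i)"

lemma sq_sum_le: fixes a b :: real shows "(a+b)^2 \<le> 2*a^2 + 2*b^2"
proof - have "0 \<le> (a-b)^2" by simp thus ?thesis by (simp add: power2_eq_square algebra_simps) qed

lemma prod_le_sq: fixes a b :: real shows "a*b \<le> a^2 + b^2"
proof -
  have "0 \<le> (a-b)^2" by simp
  hence "2*(a*b) \<le> a*a+b*b" by (simp add: power2_eq_square algebra_simps)
  moreover have "0 \<le> a*a" "0 \<le> b*b" by simp_all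
  ultimately show ?thesis unfolding power2_eq_square by linarith
qed

lemma nn_summable_bound:
  fixes f :: "'a \<Rightarrow> real"
  assumes nn: "\<And>x. x \<in> A \<Longrightarrow> 0 \<le> f x" and b: "\<And>F. finite F \<Longrightarrow> F \<subseteq> A \<Longrightarrow> sum f F \<le> M"
  shows "f summable_on A" "infsum f A \<le> M"
proof -
  have bdd: "bdd_above (sum f ` {F. F\<subseteq>A \<and> finite F})"
    using b by (auto intro!: bdd_aboveI)
  show s: "f summable_on A" by (rule nonneg_bdd_above_summable_on[OF nn bdd]) auto
  have "infsum f A = (SUP F\<in>{F. finite F \<and> F \<subseteq> A}. (sum f F))"
    using infsum_nonneg_is_SUPREMUM_real[OF s nn] by auto
  also have "\<dots> \<le> M"
    by (rule cSUP_least) (use b in auto)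
  finally show "infsum f A \<le> M" .
qed

lemma nn_sum_le_infsum:
  fixes f :: "'a \<Rightarrow> real"
  assumes "f summable_on A" "\<And>x. x \<in> A \<Longrightarrow> 0 \<le> f x" "finite F" "F \<subseteq> A"
  shows "sum f F \<le> infsum f A"
proof -
  have "sum f F = infsum f F" using assms by simp
  also have "\<dots> \<le> infsum f A"
    by (rule infsum_mono2) (use assms in \<open>auto intro: summable_on_finite\<close>)
  finally show ?thesis .
qed

lemma l2norm_sq: "(l2norm v)^2 = (\<Sum>\<^sub>\<infinity>i. (cmod (v i))^2)"
proof -
  have "0 \<le> (\<Sum>\<^sub>\<infinity>i. (cmod (v i))^2)" by (rule infsum_nonneg) simp
  thus ?thesis unfolding l2norm_def by simp
qed

lemma l2norm_nonneg[simp]: "0 \<le> l2norm v"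
  unfolding l2norm_def by (simp add: infsum_nonneg)

lemma ell2_sum_le: "ell2 v \<Longrightarrow> finite F \<Longrightarrow> (\<Sum>i\<in>F. (cmod (v i))^2) \<le> (l2norm v)^2"
  unfolding l2norm_sq ell2_def by (rule nn_sum_le_infsum) auto

lemma ell2_bound:
  assumes "\<And>F. finite F \<Longrightarrow> (\<Sum>i\<in>F. (cmod (v i))^2) \<le> M^2" "0 \<le> M"
  shows "ell2 v" "l2norm v \<le> M"
proof -
  show "ell2 v" unfolding ell2_def by (rule nn_summable_bound(1)) (use assms in auto)
  have "(l2norm v)^2 \<le> M^2" unfolding l2norm_sq by (rule nn_summable_bound(2)) (use assms in auto)
  then show "l2norm v \<le> M" using assms(2) by (meson l2norm_nonneg power2_le_imp_le)
qed

lemma ell2_comparison: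
  assumes "ell2 u" "\<And>i. cmod (v i) \<le> C * cmod (u i)"
  shows "ell2 v"
  unfolding ell2_def
proof (rule summable_on_comparison_test)
  show "(\<lambda>i. C^2 * (cmod (u i))^2) summable_on UNIV"
    using assms(1) unfolding ell2_def by (rule summable_on_cmult_right)
  fix i
  have "cmod (v i) \<le> \<bar>C\<bar> * cmod (u i)" using assms(2)[of i]
    by (meson abs_ge_self dual_order.trans mult_right_mono norm_ge_zero)
  hence "(cmod (v i))^2 \<le> (\<bar>C\<bar> * cmod (u i))^2" by (simp add: power_mono)
  thus "(cmod (v i))^2 \<le> C^2 * (cmod (u i))^2" by (simp add: power_mult_distrib)
qed auto

lemma ell2_scale: "ell2 v \<Longrightarrow> ell2 (\<lambda>i. c * v i)"
  by (rule ell2_comparison[where C="cmod c"]) (auto simp: norm_mult)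

lemma ell2_cnj: "ell2 v \<Longrightarrow> ell2 (\<lambda>i. cnj (v i))"
  by (rule ell2_comparison[where C=1]) auto

lemma ell2_uminus: "ell2 v \<Longrightarrow> ell2 (\<lambda>i. - v i)"
  by (rule ell2_comparison[where C=1]) auto

lemma ell2_0[simp]: "ell2 (\<lambda>i. 0)"
  unfolding ell2_def by simp

lemma ell2_add:
  assumes "ell2 u" "ell2 v" shows "ell2 (\<lambda>i. u i + v i)"
  unfolding ell2_def
proof (rule summable_on_comparison_test)
  show "(\<lambda>i. 2 * (cmod (u i))^2 + 2 * (cmod (v i))^2) summable_on UNIV"
    using assms unfolding ell2_def by (intro summable_on_add summable_on_cmult_right)
  fix i
  have "cmod (u i + v i) \<le> cmod (u i) + cmod (v i)" by (rule norm_triangle_ineq)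
  hence "(cmod (u i + v i))^2 \<le> (cmod (u i) + cmod (v i))^2" by (simp add: power_mono)
  also have "\<dots> \<le> 2 * (cmod (u i))^2 + 2 * (cmod (v i))^2"
    by (rule sq_sum_le)
  finally show "(cmod (u i + v i))^2 \<le> 2 * (cmod (u i))^2 + 2 * (cmod (v i))^2" .
qed auto

lemma ell2_diff: "ell2 u \<Longrightarrow> ell2 v \<Longrightarrow> ell2 (\<lambda>i. u i - v i)"
  using ell2_add[of u "\<lambda>i. - v i"] ell2_uminus[of v] by simp

lemma ell2_finite_support:
  assumes "finite F" "\<And>i. i \<notin> F \<Longrightarrow> v i = 0" shows "ell2 v"
  unfolding ell2_def
proof -
  have "(\<lambda>i. (cmod (v i))^2) summable_on F" using assms(1) by (rule summable_on_finite)
  moreover have "((\<lambda>i. (cmod (v i))^2) summable_on F) = ((\<lambda>i. (cmod (v i))^2) summable_on UNIV)"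
    by (rule summable_on_cong_neutral) (use assms(2) in auto)
  ultimately show "(\<lambda>i. (cmod (v i))^2) summable_on UNIV" by simp
qed

lemma ell2_restrict: "ell2 v \<Longrightarrow> ell2 (\<lambda>i. if i \<in> F then v i else 0)"
  by (rule ell2_comparison[where C=1]) auto

lemma ell2_restrict_fin: "finite F \<Longrightarrow> ell2 (\<lambda>i. if i \<in> F then v i else 0)"
  by (rule ell2_finite_support[of F]) auto

lemma prod_abs_summable:
  assumes "ell2 u" "ell2 v" "\<And>i. cmod (f i) \<le> cmod (u i) * cmod (v i)"
  shows "(\<lambda>i. norm (f i)) summable_on UNIV"
proof (rule Infinite_Sum.abs_summable_on_comparison_test')
  show "(\<lambda>i. (cmod (u i))^2 + (cmod (v i))^2) summable_on UNIV"
    using assms unfolding ell2_def by (intro summable_on_add)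
  fix i
  have "cmod (u i) * cmod (v i) \<le> (cmod (u i))^2 + (cmod (v i))^2"
    by (rule prod_le_sq)
  thus "norm (f i) \<le> (cmod (u i))^2 + (cmod (v i))^2" using assms(3)[of i] by simp
qed

lemma prod_summable:
  assumes "ell2 u" "ell2 v" "\<And>i. cmod (f i) \<le> cmod (u i) * cmod (v i)"
  shows "f summable_on UNIV"
  using prod_abs_summable[OF assms] abs_summable_summable by blast

lemma cinner_summable: "ell2 u \<Longrightarrow> ell2 v \<Longrightarrow> (\<lambda>i. cnj (u i) * v i) summable_on UNIV"
  by (rule prod_summable[of u v]) (auto simp: norm_mult)

lemma cinner_abs_summable: "ell2 u \<Longrightarrow> ell2 v \<Longrightarrow> (\<lambda>i. norm (cnj (u i) * v i)) summable_on UNIV"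
  by (rule prod_abs_summable[of u v]) (auto simp: norm_mult)

lemma finite_CS:
  "(\<Sum>i\<in>F. cmod (u i) * cmod (v i)) \<le> sqrt (\<Sum>i\<in>F. (cmod (u i))^2) * sqrt (\<Sum>i\<in>F. (cmod (v i))^2)"
proof -
  have "(\<Sum>i\<in>F. cmod (u i) * cmod (v i))^2 \<le> (\<Sum>i\<in>F. (cmod (u i))^2) * (\<Sum>i\<in>F. (cmod (v i))^2)"
    by (rule Cauchy_Schwarz_ineq_sum)
  hence "sqrt ((\<Sum>i\<in>F. cmod (u i) * cmod (v i))^2) \<le> sqrt ((\<Sum>i\<in>F. (cmod (u i))^2) * (\<Sum>i\<in>F. (cmod (v i))^2))"
    by (rule real_sqrt_le_mono)
  moreover have "0 \<le> (\<Sum>i\<in>F. cmod (u i) * cmod (v i))" by (intro sum_nonneg) auto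
  ultimately show ?thesis by (simp add: real_sqrt_mult)
qed

lemma abs_CS:
  assumes "ell2 u" "ell2 v"
  shows "(\<Sum>\<^sub>\<infinity>i. cmod (u i) * cmod (v i)) \<le> l2norm u * l2norm v"
proof (rule nn_summable_bound(2))
  fix F :: "'a set" assume F: "finite F"
  have "(\<Sum>i\<in>F. cmod (u i) * cmod (v i)) \<le> sqrt (\<Sum>i\<in>F. (cmod (u i))^2) * sqrt (\<Sum>i\<in>F. (cmod (v i))^2)"
    by (rule finite_CS)
  also have "\<dots> \<le> l2norm u * l2norm v"
  proof (intro mult_mono)
    have "sqrt (\<Sum>i\<in>F. (cmod (u i))^2) \<le> sqrt ((l2norm u)^2)"
      using ell2_sum_le[OF assms(1) F] by (rule real_sqrt_le_mono)
    thus "sqrt (\<Sum>i\<in>F. (cmod (u i))^2) \<le> l2norm u" by simp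
    have "sqrt (\<Sum>i\<in>F. (cmod (v i))^2) \<le> sqrt ((l2norm v)^2)"
      using ell2_sum_le[OF assms(2) F] by (rule real_sqrt_le_mono)
    thus "sqrt (\<Sum>i\<in>F. (cmod (v i))^2) \<le> l2norm v" by simp
  qed (auto intro!: sum_nonneg)
  finally show "(\<Sum>i\<in>F. cmod (u i) * cmod (v i)) \<le> l2norm u * l2norm v" .
qed auto

lemma CS_gen:
  assumes "ell2 u" "ell2 v" "\<And>i. cmod (f i) \<le> cmod (u i) * cmod (v i)"
  shows "cmod (infsum f UNIV) \<le> l2norm u * l2norm v"
proof -
  have "cmod (infsum f UNIV) \<le> (\<Sum>\<^sub>\<infinity>i. cmod (f i))"
    by (rule norm_infsum_bound) (rule prod_abs_summable[OF assms])
  also have "\<dots> \<le> (\<Sum>\<^sub>\<infinity>i. cmod (u i) * cmod (v i))"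
    apply (rule infsum_mono)
    using prod_abs_summable[OF assms] apply simp
    using prod_abs_summable[OF assms(1,2), of "\<lambda>i. of_real (cmod (u i) * cmod (v i))"]
     apply (simp add: norm_mult)
    using assms(3) by simp
  also have "\<dots> \<le> l2norm u * l2norm v" by (rule abs_CS[OF assms(1,2)])
  finally show ?thesis .
qed

lemma CS: "ell2 u \<Longrightarrow> ell2 v \<Longrightarrow> cmod (cinner u v) \<le> l2norm u * l2norm v"
  unfolding cinner_def by (rule CS_gen) (auto simp: norm_mult)


lemma finsum_summable:
  fixes f :: "'a \<Rightarrow> 'b \<Rightarrow> 'c::{topological_comm_monoid_add,t2_space}"
  assumes "finite F" "\<And>i. i \<in> F \<Longrightarrow> f i summable_on A"
  shows "(\<lambda>x. \<Sum>i\<in>F. f i x) summable_on A"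
  using assms by (induction F rule: finite_induct) (auto intro!: summable_on_add)

lemma infsum_finsum:
  fixes f :: "'a \<Rightarrow> 'b \<Rightarrow> 'c::{topological_comm_monoid_add,t2_space}"
  assumes "finite F" "\<And>i. i \<in> F \<Longrightarrow> f i summable_on A"
  shows "(\<Sum>i\<in>F. infsum (f i) A) = infsum (\<lambda>x. \<Sum>i\<in>F. f i x) A"
  using assms
proof (induction F rule: finite_induct)
  case (insert a F)
  have "(\<Sum>i\<in>insert a F. infsum (f i) A) = infsum (f a) A + (\<Sum>i\<in>F. infsum (f i) A)"
    using insert by simp
  also have "\<dots> = infsum (f a) A + infsum (\<lambda>x. \<Sum>i\<in>F. f i x) A" using insert by simp
  also have "\<dots> = infsum (\<lambda>x. f a x + (\<Sum>i\<in>F. f i x)) A"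
    by (rule infsum_add[symmetric]) (use insert in \<open>auto intro!: finsum_summable\<close>)
  finally show ?case using insert by simp
qed simp

lemma infsum_single_point: "(\<Sum>\<^sub>\<infinity>j. if j = k then (f j::'c::{topological_comm_monoid_add,t2_space}) else 0) = f k"
proof -
  have "(\<Sum>\<^sub>\<infinity>j. if j = k then f j else 0) = (\<Sum>\<^sub>\<infinity>j\<in>{k}. if j = k then f j else 0)"
    by (rule infsum_cong_neutral) auto
  also have "\<dots> = f k" by simp
  finally show ?thesis .
qed

lemma infsum_restrict_fin:
  fixes f :: "'a \<Rightarrow> 'c::{topological_comm_monoid_add,t2_space}"
  assumes "finite F" shows "(\<Sum>\<^sub>\<infinity>j. if j \<in> F then f j else 0) = sum f F"
proof -
  have "(\<Sum>\<^sub>\<infinity>j. if j \<in> F then f j else 0) = (\<Sum>\<^sub>\<infinity>j\<in>F. if j \<in> F then f j else 0)"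
    by (rule infsum_cong_neutral) auto
  also have "\<dots> = sum f F" using assms by simp
  finally show ?thesis .
qed

lemma cinner_add_right: "ell2 u \<Longrightarrow> ell2 v \<Longrightarrow> ell2 w \<Longrightarrow> cinner u (\<lambda>i. v i + w i) = cinner u v + cinner u w"
  unfolding cinner_def by (simp add: distrib_left infsum_add cinner_summable)

lemma cinner_add_left: "ell2 u \<Longrightarrow> ell2 v \<Longrightarrow> ell2 w \<Longrightarrow> cinner (\<lambda>i. u i + v i) w = cinner u w + cinner v w"
  unfolding cinner_def by (simp add: distrib_right infsum_add cinner_summable)

lemma cinner_scale_right: "ell2 u \<Longrightarrow> ell2 v \<Longrightarrow> cinner u (\<lambda>i. c * v i) = c * cinner u v"
  unfolding cinner_def
  by (subst infsum_cmult_right[symmetric]) (auto simp: cinner_summable mult.left_commute)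

lemma cinner_scale_left: "ell2 u \<Longrightarrow> ell2 v \<Longrightarrow> cinner (\<lambda>i. c * u i) v = cnj c * cinner u v"
  unfolding cinner_def
  by (subst infsum_cmult_right[symmetric]) (auto simp: cinner_summable mult.assoc)

lemma cinner_uminus_right: "ell2 u \<Longrightarrow> ell2 v \<Longrightarrow> cinner u (\<lambda>i. - v i) = - cinner u v"
  unfolding cinner_def by (simp add: infsum_uminus)

lemma cinner_uminus_left: "ell2 u \<Longrightarrow> ell2 v \<Longrightarrow> cinner (\<lambda>i. - u i) v = - cinner u v"
  unfolding cinner_def by (simp add: infsum_uminus)

lemma cinner_diff_right: "ell2 u \<Longrightarrow> ell2 v \<Longrightarrow> ell2 w \<Longrightarrow> cinner u (\<lambda>i. v i - w i) = cinner u v - cinner u w"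
  using cinner_add_right[of u v "\<lambda>i. - w i"] cinner_uminus_right[of u w] ell2_uminus[of w] by simp

lemma cinner_diff_left: "ell2 u \<Longrightarrow> ell2 v \<Longrightarrow> ell2 w \<Longrightarrow> cinner (\<lambda>i. u i - v i) w = cinner u w - cinner v w"
  using cinner_add_left[of u "\<lambda>i. - v i" w] cinner_uminus_left[of v w] ell2_uminus[of v] by simp

lemma cinner_swap: "cinner v u = cnj (cinner u v)"
  unfolding cinner_def by (simp add: infsum_cnj[symmetric] mult.commute)

lemma cinner_self: "ell2 v \<Longrightarrow> cinner v v = complex_of_real ((l2norm v)^2)"
proof -
  assume v: "ell2 v"
  have "((\<lambda>i. complex_of_real ((cmod (v i))^2)) has_sum complex_of_real (\<Sum>\<^sub>\<infinity>i. (cmod (v i))^2)) UNIV"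
    by (rule has_sum_of_real) (use v in \<open>auto simp: ell2_def\<close>)
  moreover have "\<And>i. complex_of_real ((cmod (v i))^2) = cnj (v i) * v i"
    using complex_norm_square by (simp add: mult.commute)
  ultimately show ?thesis unfolding cinner_def l2norm_sq by (simp add: infsumI)
qed

lemma l2norm_scale: "ell2 v \<Longrightarrow> l2norm (\<lambda>i. c * v i) = cmod c * l2norm v"
proof -
  assume v: "ell2 v"
  have "(l2norm (\<lambda>i. c * v i))^2 = (\<Sum>\<^sub>\<infinity>i. (cmod c)^2 * (cmod (v i))^2)"
    unfolding l2norm_sq by (simp add: norm_mult power_mult_distrib)
  also have "\<dots> = (cmod c)^2 * (l2norm v)^2" unfolding l2norm_sq by (rule infsum_cmult_right) (use v in \<open>simp add: ell2_def\<close>)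
  finally have "(l2norm (\<lambda>i. c * v i))^2 = (cmod c * l2norm v)^2" by (simp add: power_mult_distrib)
  thus ?thesis by (simp add: power2_eq_iff_nonneg)
qed

lemma l2norm_uminus: "l2norm (\<lambda>i. - v i) = l2norm v"
  unfolding l2norm_def by simp

lemma l2norm_cnj: "l2norm (\<lambda>i. cnj (v i)) = l2norm v"
  unfolding l2norm_def by simp

lemma l2norm_sq_expand:
  assumes "ell2 u" "ell2 v"
  shows "(l2norm (\<lambda>i. u i + v i))^2 = (l2norm u)^2 + 2 * Re (cinner u v) + (l2norm v)^2"
proof -
  have uv: "ell2 (\<lambda>i. u i + v i)" using assms by (rule ell2_add)
  have "complex_of_real ((l2norm (\<lambda>i. u i + v i))^2) = cinner (\<lambda>i. u i + v i) (\<lambda>i. u i + v i)"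
    using cinner_self[OF uv] by simp
  also have "\<dots> = cinner u u + cinner u v + cinner v u + cinner v v"
    using assms uv by (simp add: cinner_add_left cinner_add_right)
  also have "\<dots> = complex_of_real ((l2norm u)^2 + 2 * Re (cinner u v) + (l2norm v)^2)"
    using assms by (simp add: cinner_self cinner_swap[of v u] complex_eq_iff)
  finally show ?thesis by (simp only: of_real_eq_iff)
qed

lemma l2norm_triangle:
  assumes "ell2 u" "ell2 v"
  shows "l2norm (\<lambda>i. u i + v i) \<le> l2norm u + l2norm v"
proof -
  have "Re (cinner u v) \<le> l2norm u * l2norm v"
    using CS[OF assms] complex_Re_le_cmod order_trans by blast
  hence "(l2norm (\<lambda>i. u i + v i))^2 \<le> (l2norm u + l2norm v)^2"
    using l2norm_sq_expand[OF assms] by (simp add: power2_sum)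
  thus ?thesis by (rule power2_le_imp_le) simp
qed

lemma l2norm_triangle_diff:
  assumes "ell2 u" "ell2 v"
  shows "l2norm (\<lambda>i. u i - v i) \<le> l2norm u + l2norm v"
  using l2norm_triangle[OF assms(1) ell2_uminus[OF assms(2)]] by (simp add: l2norm_uminus)

lemma l2norm_eq_0: "ell2 v \<Longrightarrow> l2norm v = 0 \<Longrightarrow> v = (\<lambda>i. 0)"
proof
  fix i assume v: "ell2 v" "l2norm v = 0"
  have "(\<Sum>\<^sub>\<infinity>i. (cmod (v i))^2) \<le> 0" using l2norm_sq[of v] v by simp
  hence "(cmod (v i))^2 = 0"
    by (rule nonneg_infsum_le_0D) (use v in \<open>auto simp: ell2_def\<close>)
  thus "v i = 0" by simp
qed

lemma l2norm_0[simp]: "l2norm (\<lambda>i. 0) = 0"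
  unfolding l2norm_def by simp

lemma cmod_le_l2norm: "ell2 v \<Longrightarrow> cmod (v i) \<le> l2norm v"
proof -
  assume v: "ell2 v"
  have "(\<Sum>j\<in>{i}. (cmod (v j))^2) \<le> (l2norm v)^2" by (rule ell2_sum_le[OF v]) simp
  hence "(cmod (v i))^2 \<le> (l2norm v)^2" by simp
  thus ?thesis by (rule power2_le_imp_le) simp
qed

lemma l2norm_restrict_fin: "finite F \<Longrightarrow> (l2norm (\<lambda>i. if i \<in> F then v i else 0))^2 = (\<Sum>i\<in>F. (cmod (v i))^2)"
proof -
  assume F: "finite F"
  have "(\<lambda>i. (cmod (if i \<in> F then v i else 0))^2) = (\<lambda>i. if i \<in> F then (cmod (v i))^2 else 0)"
    by auto
  thus ?thesis unfolding l2norm_sq using infsum_restrict_fin[OF F, of "\<lambda>i. (cmod (v i))^2"] by simp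
qed

lemma l2norm_restrict_le: "ell2 v \<Longrightarrow> l2norm (\<lambda>i. if i \<in> F then v i else 0) \<le> l2norm v"
proof -
  assume v: "ell2 v"
  have "(l2norm (\<lambda>i. if i \<in> F then v i else 0))^2 \<le> (l2norm v)^2"
    unfolding l2norm_sq
    by (rule infsum_mono) (use v ell2_restrict[OF v, of F] in \<open>auto simp: ell2_def\<close>)
  thus ?thesis by (rule power2_le_imp_le) simp
qed

lemma dual_bound:
  assumes M: "0 \<le> M"
    and H: "\<And>F. finite F \<Longrightarrow> (\<Sum>i\<in>F. (cmod (w i))^2) \<le> M * sqrt (\<Sum>i\<in>F. (cmod (w i))^2)"
  shows "ell2 w" "l2norm w \<le> M"
proof -
  have b: "(\<Sum>i\<in>F. (cmod (w i))^2) \<le> M^2" if F: "finite F" for F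
  proof -
    define s where "s = (\<Sum>i\<in>F. (cmod (w i))^2)"
    have s0: "0 \<le> s" unfolding s_def by (intro sum_nonneg) auto
    have "s \<le> M * sqrt s" using H[OF F] unfolding s_def .
    hence "sqrt s * sqrt s \<le> M * sqrt s" using s0 by simp
    have "sqrt s \<le> M"
    proof (cases "s = 0")
      case True thus ?thesis using M by simp
    next
      case False
      hence "0 < sqrt s" using s0 by simp
      thus ?thesis using \<open>sqrt s * sqrt s \<le> M * sqrt s\<close> by (rule mult_right_le_imp_le[rotated])
    qed
    hence "(sqrt s)^2 \<le> M^2" by (rule power_mono) (simp add: s0)
    thus ?thesis using s0 unfolding s_def by simp
  qed
  show "ell2 w" "l2norm w \<le> M" using ell2_bound[OF b M] by auto
qed


definition ebas :: "'i \<Rightarrow> 'i \<Rightarrow> complex" where "ebas k = (\<lambda>i. if i = k then 1 else 0)"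

definition restr :: "'i set \<Rightarrow> ('i \<Rightarrow> complex) \<Rightarrow> 'i \<Rightarrow> complex" where
  "restr F u = (\<lambda>i. if i \<in> F then u i else 0)"

lemma ell2_ebas[simp]: "ell2 (ebas k)"
  unfolding ebas_def by (rule ell2_finite_support[of "{k}"]) auto

lemma l2norm_ebas: "l2norm (ebas k) = 1"
proof -
  have "(\<lambda>i. (cmod (ebas k i))^2) = (\<lambda>i. if i \<in> {k} then 1 else 0)" by (auto simp: ebas_def)
  hence "(l2norm (ebas k))^2 = 1" unfolding l2norm_sq using infsum_restrict_fin[of "{k}" "\<lambda>_. 1::real"] by simp
  thus ?thesis by (simp add: power2_eq_1_iff) (metis l2norm_nonneg neg_0_le_iff_le not_one_le_zero)
qed

lemma bdd_ell2: "bounded_mat A \<Longrightarrow> ell2 v \<Longrightarrow> ell2 (mat_apply A v)"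
  unfolding bounded_mat_def by blast

lemma bdd_row: "bounded_mat A \<Longrightarrow> ell2 v \<Longrightarrow> (\<lambda>j. A i j * v j) summable_on UNIV"
  unfolding bounded_mat_def by blast

lemma bdd_const:
  assumes "bounded_mat A"
  obtains C where "0 \<le> C" "\<And>v. ell2 v \<Longrightarrow> l2norm (mat_apply A v) \<le> C * l2norm v"
proof -
  obtain C where C: "\<And>v. ell2 v \<Longrightarrow> l2norm (mat_apply A v) \<le> C * l2norm v"
    using assms unfolding bounded_mat_def by blast
  have "l2norm (mat_apply A v) \<le> max C 0 * l2norm v" if "ell2 v" for v
    using order_trans[OF C[OF that] mult_right_mono[OF max.cobounded1 l2norm_nonneg]] .
  thus ?thesis using that[of "max C 0"] by auto
qed

lemma mat_apply_add:
  "bounded_mat A \<Longrightarrow> ell2 u \<Longrightarrow> ell2 v \<Longrightarrow> mat_apply A (\<lambda>i. u i + v i) = (\<lambda>i. mat_apply A u i + mat_apply A v i)"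
  unfolding mat_apply_def by (auto simp: distrib_left intro!: ext infsum_add bdd_row)

lemma mat_apply_scale:
  "bounded_mat A \<Longrightarrow> ell2 u \<Longrightarrow> mat_apply A (\<lambda>i. c * u i) = (\<lambda>i. c * mat_apply A u i)"
  unfolding mat_apply_def
  by (auto intro!: ext simp: infsum_cmult_right[symmetric] bdd_row mult.left_commute)

lemma mat_apply_uminus:
  "bounded_mat A \<Longrightarrow> ell2 u \<Longrightarrow> mat_apply A (\<lambda>i. - u i) = (\<lambda>i. - mat_apply A u i)"
  unfolding mat_apply_def by (auto intro!: ext simp: infsum_uminus)

lemma mat_apply_diff:
  "bounded_mat A \<Longrightarrow> ell2 u \<Longrightarrow> ell2 v \<Longrightarrow> mat_apply A (\<lambda>i. u i - v i) = (\<lambda>i. mat_apply A u i - mat_apply A v i)"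
  using mat_apply_add[of A u "\<lambda>i. - v i"] mat_apply_uminus[of A v] ell2_uminus[of v] by simp

lemma mat_apply_ebas: "mat_apply A (ebas k) = (\<lambda>i. A i k)"
  unfolding mat_apply_def ebas_def
  using infsum_single_point[of k "\<lambda>j. A _ j"] by (auto intro!: ext simp: if_distrib cong: if_cong)

lemma col_ell2: "bounded_mat A \<Longrightarrow> ell2 (\<lambda>i. A i k)"
  using bdd_ell2[of A "ebas k"] by (simp add: mat_apply_ebas)

lemma mat_apply_restr: "finite F \<Longrightarrow> mat_apply A (restr F u) l = (\<Sum>i\<in>F. A l i * u i)"
  unfolding mat_apply_def restr_def
  using infsum_restrict_fin[of F "\<lambda>i. A l i * u i"] by (simp add: if_distrib cong: if_cong)

lemma ell2_restr: "ell2 u \<Longrightarrow> ell2 (restr F u)"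
  unfolding restr_def by (rule ell2_restrict)

lemma fin_support_summable:
  fixes f :: "'a \<Rightarrow> 'c::{topological_comm_monoid_add}"
  assumes "finite F" shows "(\<lambda>i. if i \<in> F then f i else 0) summable_on UNIV"
proof -
  have "(\<lambda>i. if i \<in> F then f i else 0) summable_on F" using assms by (rule summable_on_finite)
  moreover have "((\<lambda>i. if i \<in> F then f i else 0) summable_on F) = ((\<lambda>i. if i \<in> F then f i else 0) summable_on UNIV)"
    by (rule summable_on_cong_neutral) auto
  ultimately show ?thesis by simp
qed

lemma tail_tendsto:
  assumes u: "ell2 u"
  shows "((\<lambda>F. l2norm (\<lambda>i. u i - restr F u i)) \<longlongrightarrow> 0) (finite_subsets_at_top UNIV)"
proof -
  define g where "g i = (cmod (u i))^2" for i
  have gs: "g summable_on UNIV" using u unfolding ell2_def g_def .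
  have eq: "l2norm (\<lambda>i. u i - restr F u i) = sqrt (infsum g UNIV - sum g F)" if F: "finite F" for F
  proof -
    have "(\<lambda>i. (cmod (u i - restr F u i))^2) = (\<lambda>i. g i - (if i \<in> F then g i else 0))"
      by (auto simp: restr_def g_def)
    hence "(\<Sum>\<^sub>\<infinity>i. (cmod (u i - restr F u i))^2) = infsum g UNIV - (\<Sum>\<^sub>\<infinity>i. if i \<in> F then g i else 0)"
      using infsum_add[OF gs summable_on_uminus[THEN iffD2, OF fin_support_summable[OF F, of g]]] infsum_uminus
      by simp
    also have "(\<Sum>\<^sub>\<infinity>i. if i \<in> F then g i else 0) = sum g F" by (rule infsum_restrict_fin[OF F])
    finally show ?thesis unfolding l2norm_def by simp
  qed
  have "((\<lambda>F. sum g F) \<longlongrightarrow> infsum g UNIV) (finite_subsets_at_top UNIV)"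
    by (rule infsum_tendsto[OF gs])
  hence "((\<lambda>F. infsum g UNIV - sum g F) \<longlongrightarrow> infsum g UNIV - infsum g UNIV) (finite_subsets_at_top UNIV)"
    by (intro tendsto_intros)
  hence "((\<lambda>F. sqrt (infsum g UNIV - sum g F)) \<longlongrightarrow> sqrt 0) (finite_subsets_at_top UNIV)"
    by (intro tendsto_intros) simp
  moreover have "\<forall>\<^sub>F F in finite_subsets_at_top UNIV. sqrt (infsum g UNIV - sum g F) = l2norm (\<lambda>i. u i - restr F u i)"
    by (rule eventually_finite_subsets_at_top_weakI) (simp add: eq)
  ultimately show ?thesis by (simp add: tendsto_cong)
qed

lemma cnj_mult_self: "cnj z * z = complex_of_real ((cmod z)^2)"
  using complex_norm_square[of z] by (simp add: mult.commute)

lemma adj_adj[simp]: "adj (adj A) = A"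
  unfolding adj_def by (auto intro!: ext)

lemma mat_apply_adj: "mat_apply (adj A) z i = cinner (\<lambda>l. A l i) z"
  unfolding mat_apply_def adj_def cinner_def ..

lemma adjoint_has_sum:
  assumes A: "bounded_mat A" and u: "ell2 u" and z: "ell2 z"
  shows "((\<lambda>i. cnj (u i) * cinner (\<lambda>l. A l i) z) has_sum cinner (mat_apply A u) z) UNIV"
proof -
  obtain C where C0: "0 \<le> C" and C: "\<And>v. ell2 v \<Longrightarrow> l2norm (mat_apply A v) \<le> C * l2norm v"
    using bdd_const[OF A] by blast
  define f where "f i = cnj (u i) * cinner (\<lambda>l. A l i) z" for i
  have fin: "sum f F = cinner (mat_apply A (restr F u)) z" if F: "finite F" for F
  proof -
    have "sum f F = (\<Sum>i\<in>F. \<Sum>\<^sub>\<infinity>l. cnj (u i) * (cnj (A l i) * z l))"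
      unfolding f_def cinner_def
      by (intro sum.cong refl infsum_cmult_right[symmetric] cinner_summable col_ell2[OF A] z)
    also have "\<dots> = (\<Sum>\<^sub>\<infinity>l. \<Sum>i\<in>F. cnj (u i) * (cnj (A l i) * z l))"
      by (rule infsum_finsum[OF F]) (intro summable_on_cmult_right cinner_summable col_ell2[OF A] z)
    also have "\<dots> = (\<Sum>\<^sub>\<infinity>l. cnj (mat_apply A (restr F u) l) * z l)"
      by (intro infsum_cong) (simp add: mat_apply_restr[OF F] sum_distrib_right sum_distrib_left mult_ac)
    finally show ?thesis unfolding cinner_def .
  qed
  have Au: "ell2 (mat_apply A u)" by (rule bdd_ell2[OF A u])
  have bound: "cmod (sum f F - cinner (mat_apply A u) z) \<le> C * l2norm z * l2norm (\<lambda>i. u i - restr F u i)"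
    if F: "finite F" for F
  proof -
    have r: "ell2 (restr F u)" by (rule ell2_restr[OF u])
    have ArF: "ell2 (mat_apply A (restr F u))" by (rule bdd_ell2[OF A r])
    have d: "ell2 (\<lambda>i. u i - restr F u i)" using u r by (rule ell2_diff)
    have "sum f F - cinner (mat_apply A u) z = - cinner (\<lambda>i. mat_apply A u i - mat_apply A (restr F u) i) z"
      using fin[OF F] cinner_diff_left[OF Au ArF z] by simp
    also have "(\<lambda>i. mat_apply A u i - mat_apply A (restr F u) i) = mat_apply A (\<lambda>i. u i - restr F u i)"
      by (rule mat_apply_diff[OF A u r, symmetric])
    finally have "cmod (sum f F - cinner (mat_apply A u) z) = cmod (cinner (mat_apply A (\<lambda>i. u i - restr F u i)) z)"
      by simp
    also have "\<dots> \<le> l2norm (mat_apply A (\<lambda>i. u i - restr F u i)) * l2norm z"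
      by (rule CS[OF bdd_ell2[OF A d] z])
    also have "\<dots> \<le> (C * l2norm (\<lambda>i. u i - restr F u i)) * l2norm z"
      by (rule mult_right_mono[OF C[OF d]]) simp
    finally show ?thesis by (simp add: mult_ac)
  qed
  have "((\<lambda>F. sum f F - cinner (mat_apply A u) z) \<longlongrightarrow> 0) (finite_subsets_at_top UNIV)"
  proof (rule Lim_null_comparison)
    show "\<forall>\<^sub>F F in finite_subsets_at_top UNIV. norm (sum f F - cinner (mat_apply A u) z) \<le> C * l2norm z * l2norm (\<lambda>i. u i - restr F u i)"
      by (rule eventually_finite_subsets_at_top_weakI) (simp add: bound)
    show "((\<lambda>F. C * l2norm z * l2norm (\<lambda>i. u i - restr F u i)) \<longlongrightarrow> 0) (finite_subsets_at_top UNIV)"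
      using tendsto_mult_right_zero[OF tail_tendsto[OF u], of "C * l2norm z"] by simp
  qed
  hence "(sum f \<longlongrightarrow> cinner (mat_apply A u) z) (finite_subsets_at_top UNIV)"
    by (simp add: Lim_null[symmetric])
  thus ?thesis unfolding has_sum_def f_def .
qed

lemma adjoint_eq:
  assumes "bounded_mat A" "ell2 u" "ell2 z"
  shows "cinner u (mat_apply (adj A) z) = cinner (mat_apply A u) z"
  using adjoint_has_sum[OF assms] unfolding cinner_def[of u] mat_apply_adj by (simp add: infsumI)

lemma adj_bounded:
  assumes A: "bounded_mat A" shows "bounded_mat (adj A)"
proof -
  obtain C where C0: "0 \<le> C" and C: "\<And>v. ell2 v \<Longrightarrow> l2norm (mat_apply A v) \<le> C * l2norm v"
    using bdd_const[OF A] by blast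
  have main: "ell2 (mat_apply (adj A) z) \<and> l2norm (mat_apply (adj A) z) \<le> C * l2norm z" if z: "ell2 z" for z
  proof -
    define w where "w = mat_apply (adj A) z"
    have H: "(\<Sum>i\<in>F. (cmod (w i))^2) \<le> (C * l2norm z) * sqrt (\<Sum>i\<in>F. (cmod (w i))^2)"
      if F: "finite F" for F
    proof -
      have r: "ell2 (restr F w)" by (rule ell2_finite_support[of F]) (auto simp: restr_def F)
      have "cinner (restr F w) w = (\<Sum>\<^sub>\<infinity>i. if i \<in> F then cnj (w i) * w i else 0)"
        unfolding cinner_def restr_def by (intro infsum_cong) auto
      also have "\<dots> = (\<Sum>i\<in>F. cnj (w i) * w i)" by (rule infsum_restrict_fin[OF F])
      also have "\<dots> = of_real (\<Sum>i\<in>F. (cmod (w i))^2)"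
        unfolding of_real_sum by (intro sum.cong refl) (rule cnj_mult_self)
      finally have ceq: "cinner (restr F w) w = of_real (\<Sum>i\<in>F. (cmod (w i))^2)" .
      have "0 \<le> (\<Sum>i\<in>F. (cmod (w i))^2)" by (intro sum_nonneg) simp
      hence eq: "(\<Sum>i\<in>F. (cmod (w i))^2) = cmod (cinner (restr F w) w)"
        unfolding ceq norm_of_real by simp
      have "cinner (restr F w) w = cinner (mat_apply A (restr F w)) z"
        using adjoint_eq[OF A r z] w_def by simp
      hence "cmod (cinner (restr F w) w) \<le> l2norm (mat_apply A (restr F w)) * l2norm z"
        using CS[OF bdd_ell2[OF A r] z] by simp
      also have "\<dots> \<le> (C * l2norm (restr F w)) * l2norm z"
        by (rule mult_right_mono[OF C[OF r]]) simp
      also have "l2norm (restr F w) = sqrt (\<Sum>i\<in>F. (cmod (w i))^2)"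
        using l2norm_restrict_fin[OF F, of w] unfolding restr_def
        by (metis l2norm_nonneg real_sqrt_unique)
      finally show ?thesis using eq by (simp add: mult_ac)
    qed
    show ?thesis using dual_bound[OF _ H] C0 unfolding w_def by (simp add: mult_nonneg_nonneg)
  qed
  have rows: "(\<lambda>j. adj A i j * z j) summable_on UNIV" if z: "ell2 z" for i z
    unfolding adj_def by (rule cinner_summable[OF col_ell2[OF A] z])
  show ?thesis unfolding bounded_mat_def using main rows by blast
qed


lemma ell2_finsum: "finite N \<Longrightarrow> (\<And>j. j \<in> N \<Longrightarrow> ell2 (f j)) \<Longrightarrow> ell2 (\<lambda>i. \<Sum>j\<in>N. f j i)"
  by (induction N rule: finite_induct) (auto intro!: ell2_add)

lemma gram_entry: "mat_mult (adj A) A i m = cinner (\<lambda>l. A l i) (\<lambda>l. A l m)"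
  unfolding mat_mult_def adj_def cinner_def ..

lemma gram_apply:
  assumes A: "bounded_mat A" and w: "ell2 w"
  shows "(\<lambda>m. mat_mult (adj A) A i m * w m) summable_on UNIV"
    "(\<Sum>\<^sub>\<infinity>m. mat_mult (adj A) A i m * w m) = mat_apply (adj A) (mat_apply A w) i"
proof -
  have adjA: "bounded_mat (adj A)" by (rule adj_bounded[OF A])
  define v where "v = mat_apply (adj A) (\<lambda>l. A l i)"
  have v: "ell2 v" unfolding v_def by (rule bdd_ell2[OF adjA col_ell2[OF A]])
  have e: "mat_mult (adj A) A i m = cnj (v m)" for m
    unfolding gram_entry v_def mat_apply_adj by (simp add: cinner_swap[of "\<lambda>l. A l i"])
  show "(\<lambda>m. mat_mult (adj A) A i m * w m) summable_on UNIV"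
    unfolding e by (rule cinner_summable[OF v w])
  have "(\<Sum>\<^sub>\<infinity>m. mat_mult (adj A) A i m * w m) = cinner v w" unfolding e cinner_def ..
  also have "\<dots> = cinner (\<lambda>l. A l i) (mat_apply A w)"
    unfolding v_def using adjoint_eq[OF adjA col_ell2[OF A] w] by simp
  also have "\<dots> = mat_apply (adj A) (mat_apply A w) i" by (simp add: mat_apply_adj)
  finally show "(\<Sum>\<^sub>\<infinity>m. mat_mult (adj A) A i m * w m) = mat_apply (adj A) (mat_apply A w) i" .
qed

lemma sot_iso:
  assumes bdd: "\<And>j. bounded_mat (b j)" and S: "sot_sum_id (\<lambda>j. mat_mult (adj (b j)) (b j))"
    and u: "ell2 u" and w: "ell2 w"
  shows "(\<lambda>j. cinner (mat_apply (b j) u) (mat_apply (b j) w)) sums cinner u w"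
proof -
  define p where "p n = (\<lambda>i. \<Sum>j<n. mat_apply (adj (b j)) (mat_apply (b j) w) i)" for n
  have pe: "mat_apply (\<lambda>r c. \<Sum>j<n. mat_mult (adj (b j)) (b j) r c) w = p n" for n
  proof
    fix i
    have "mat_apply (\<lambda>r c. \<Sum>j<n. mat_mult (adj (b j)) (b j) r c) w i
        = (\<Sum>\<^sub>\<infinity>m. \<Sum>j<n. mat_mult (adj (b j)) (b j) i m * w m)"
      unfolding mat_apply_def by (simp add: sum_distrib_right)
    also have "\<dots> = (\<Sum>j<n. \<Sum>\<^sub>\<infinity>m. mat_mult (adj (b j)) (b j) i m * w m)"
      by (rule infsum_finsum[symmetric]) (auto intro: gram_apply(1)[OF bdd w])
    also have "\<dots> = p n i" unfolding p_def using gram_apply(2)[OF bdd w] by simp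
    finally show "mat_apply (\<lambda>r c. \<Sum>j<n. mat_mult (adj (b j)) (b j) r c) w i = p n i" .
  qed
  have pl: "ell2 (p n)" for n
    unfolding p_def by (rule ell2_finsum) (auto intro!: bdd_ell2 adj_bounded bdd w)
  have lim: "(\<lambda>n. l2norm (\<lambda>i. p n i - w i)) \<longlonglongrightarrow> 0"
  proof -
    have "(\<lambda>n. l2norm (\<lambda>i. mat_apply (\<lambda>r c. \<Sum>j<n. mat_mult (adj (b j)) (b j) r c) w i - w i)) \<longlonglongrightarrow> 0"
      using S w unfolding sot_sum_id_def by blast
    thus ?thesis by (simp add: pe)
  qed
  have cp: "cinner u (p n) = (\<Sum>j<n. cinner (mat_apply (b j) u) (mat_apply (b j) w))" for n
  proof -
    have "cinner u (p n) = (\<Sum>\<^sub>\<infinity>i. \<Sum>j<n. cnj (u i) * mat_apply (adj (b j)) (mat_apply (b j) w) i)"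
      unfolding cinner_def p_def by (simp add: sum_distrib_left)
    also have "\<dots> = (\<Sum>j<n. \<Sum>\<^sub>\<infinity>i. cnj (u i) * mat_apply (adj (b j)) (mat_apply (b j) w) i)"
      by (rule infsum_finsum[symmetric]) (auto intro!: cinner_summable u bdd_ell2 adj_bounded bdd w)
    also have "\<dots> = (\<Sum>j<n. cinner (mat_apply (b j) u) (mat_apply (b j) w))"
    proof (intro sum.cong refl)
      fix j
      show "(\<Sum>\<^sub>\<infinity>i. cnj (u i) * mat_apply (adj (b j)) (mat_apply (b j) w) i) = cinner (mat_apply (b j) u) (mat_apply (b j) w)"
        using adjoint_eq[OF bdd u bdd_ell2[OF bdd w]] unfolding cinner_def .
    qed
    finally show ?thesis .
  qed
  have "(\<lambda>n. cinner u (p n) - cinner u w) \<longlonglongrightarrow> 0"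
  proof (rule Lim_null_comparison)
    show "\<forall>\<^sub>F n in sequentially. norm (cinner u (p n) - cinner u w) \<le> l2norm u * l2norm (\<lambda>i. p n i - w i)"
      using CS[OF u ell2_diff[OF pl w]] cinner_diff_right[OF u pl w] by simp
    show "(\<lambda>n. l2norm u * l2norm (\<lambda>i. p n i - w i)) \<longlonglongrightarrow> 0"
      using tendsto_mult_right_zero[OF lim] by simp
  qed
  hence "(\<lambda>n. cinner u (p n)) \<longlonglongrightarrow> cinner u w" by (simp add: Lim_null[symmetric])
  thus ?thesis unfolding sums_def cp .
qed

lemma sot_iso_norm:
  assumes bdd: "\<And>j. bounded_mat (b j)" and S: "sot_sum_id (\<lambda>j. mat_mult (adj (b j)) (b j))"
    and u: "ell2 u"
  shows "((\<lambda>j. (l2norm (mat_apply (b j) u))^2) has_sum (l2norm u)^2) UNIV"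
proof -
  have "(\<lambda>j. cinner (mat_apply (b j) u) (mat_apply (b j) u)) sums cinner u u" by (rule sot_iso[OF bdd S u u])
  hence "(\<lambda>j. complex_of_real ((l2norm (mat_apply (b j) u))^2)) sums complex_of_real ((l2norm u)^2)"
    using u by (simp add: cinner_self bdd_ell2[OF bdd])
  hence "(\<lambda>j. (l2norm (mat_apply (b j) u))^2) sums (l2norm u)^2"
    by (simp only: sums_of_real_iff)
  thus ?thesis by (rule sums_nonneg_imp_has_sum) simp
qed

lemma sot_iso_has_sum:
  assumes bdd: "\<And>j. bounded_mat (b j)" and S: "sot_sum_id (\<lambda>j. mat_mult (adj (b j)) (b j))"
    and u: "ell2 u" and w: "ell2 w"
  shows "((\<lambda>j. cinner (mat_apply (b j) u) (mat_apply (b j) w)) has_sum cinner u w) UNIV"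
proof (rule norm_summable_imp_has_sum)
  show "(\<lambda>j. cinner (mat_apply (b j) u) (mat_apply (b j) w)) sums cinner u w" by (rule sot_iso[OF assms])
  have su: "summable (\<lambda>j. (l2norm (mat_apply (b j) u))^2)"
    using sot_iso_norm[OF bdd S u] by (auto dest: has_sum_imp_sums simp: sums_iff)
  have sw: "summable (\<lambda>j. (l2norm (mat_apply (b j) w))^2)"
    using sot_iso_norm[OF bdd S w] by (auto dest: has_sum_imp_sums simp: sums_iff)
  show "summable (\<lambda>j. norm (cinner (mat_apply (b j) u) (mat_apply (b j) w)))"
  proof (rule summable_comparison_test)
    show "\<exists>N. \<forall>n\<ge>N. norm (norm (cinner (mat_apply (b n) u) (mat_apply (b n) w))) \<le> (l2norm (mat_apply (b n) u))^2 + (l2norm (mat_apply (b n) w))^2"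
    proof (intro exI allI impI)
      fix n
      have "norm (norm (cinner (mat_apply (b n) u) (mat_apply (b n) w))) \<le> l2norm (mat_apply (b n) u) * l2norm (mat_apply (b n) w)"
        using CS[OF bdd_ell2[OF bdd u] bdd_ell2[OF bdd w]] by simp
      also have "\<dots> \<le> (l2norm (mat_apply (b n) u))^2 + (l2norm (mat_apply (b n) w))^2" by (rule prod_le_sq)
      finally show "norm (norm (cinner (mat_apply (b n) u) (mat_apply (b n) w))) \<le> (l2norm (mat_apply (b n) u))^2 + (l2norm (mat_apply (b n) w))^2" .
    qed
    show "summable (\<lambda>n. (l2norm (mat_apply (b n) u))^2 + (l2norm (mat_apply (b n) w))^2)"
      using su sw by (rule summable_add)
  qed
qed


lemma ennreal_infsum_nn:
  fixes g :: "'a \<Rightarrow> real" assumes nn: "\<And>x. 0 \<le> g x"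
  shows "(\<Sum>\<^sub>\<infinity>x. ennreal (g x)) = (if g summable_on UNIV then ennreal (infsum g UNIV) else \<infinity>)"
proof -
  have E: "(\<Sum>\<^sub>\<infinity>x. ennreal (g x)) = (SUP F\<in>{F. finite F \<and> F \<subseteq> UNIV}. sum (\<lambda>x. ennreal (g x)) F)"
    by (rule nonneg_infsum_complete) simp
  have S: "sum (\<lambda>x. ennreal (g x)) F = ennreal (sum g F)" for F
    by (rule sum_ennreal) (use nn in auto)
  show ?thesis
  proof (cases "g summable_on UNIV")
    case True
    then show ?thesis unfolding E S using infsum_nonneg_is_SUPREMUM_ennreal[OF True] nn by simp
  next
    case False
    have "(SUP F\<in>{F. finite F \<and> F \<subseteq> UNIV}. ennreal (sum g F)) = \<infinity>"
    proof (rule ccontr)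
      assume "(SUP F\<in>{F. finite F \<and> F \<subseteq> UNIV}. ennreal (sum g F)) \<noteq> \<infinity>"
      then obtain M where M: "(SUP F\<in>{F. finite F \<and> F \<subseteq> UNIV}. ennreal (sum g F)) = ennreal M" "0 \<le> M"
        by (cases "(SUP F\<in>{F. finite F \<and> F \<subseteq> UNIV}. ennreal (sum g F))" rule: ennreal_cases) auto
      have "sum g F \<le> M" if "finite F" for F
      proof -
        have "ennreal (sum g F) \<le> ennreal M" unfolding M(1)[symmetric] by (rule SUP_upper) (use that in auto)
        thus ?thesis using M(2) by (simp add: ennreal_le_iff)
      qed
      hence "g summable_on UNIV" by (intro nn_summable_bound(1)) (use nn in auto)
      with False show False by simp
    qed
    then show ?thesis unfolding E S using False by simp
  qed
qed

definition unc :: "('r \<Rightarrow> 'c \<Rightarrow> complex) \<Rightarrow> 'r \<times> 'c \<Rightarrow> complex" where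
  "unc x = (\<lambda>p. x (fst p) (snd p))"

lemma hs2_eq: "hs2 x = (if ell2 (unc x) then ennreal ((l2norm (unc x))^2) else \<infinity>)"
  unfolding hs2_def ell2_def unc_def using ennreal_infsum_nn[of "\<lambda>p. (cmod (x (fst p) (snd p)))^2"]
  by (simp add: l2norm_sq)

lemma is_HS_iff: "is_HS x \<longleftrightarrow> ell2 (unc x)"
  unfolding is_HS_def hs2_eq by simp

lemma hs2_finite_iff: "hs2 x < \<infinity> \<longleftrightarrow> ell2 (unc x)"
  unfolding hs2_eq by simp

lemma hs_norm_eq: "hs_norm x = l2norm (unc x)"
proof (cases "ell2 (unc x)")
  case True
  then show ?thesis unfolding hs_norm_def hs2_eq by simp
next
  case False
  hence "\<not> (\<lambda>i. (cmod (unc x i))^2) summable_on UNIV" unfolding ell2_def .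
  hence "l2norm (unc x) = 0" unfolding l2norm_def by (simp add: infsum_not_exists)
  then show ?thesis using False unfolding hs_norm_def hs2_eq by simp
qed

lemma fubini_nn1:
  fixes g :: "'a \<times> 'b \<Rightarrow> real"
  assumes nn: "\<And>p. 0 \<le> g p" and s: "g summable_on UNIV"
  shows "(\<lambda>b. g (a, b)) summable_on UNIV" "((\<lambda>a. \<Sum>\<^sub>\<infinity>b. g (a, b)) has_sum infsum g UNIV) UNIV"
proof -
  have s': "(\<lambda>(x, y). g (x, y)) summable_on Sigma UNIV (\<lambda>_. UNIV)" using s by simp
  show "(\<lambda>b. g (a, b)) summable_on UNIV"
    using summable_on_SigmaD1[OF s', of a] by simp
  have "(\<lambda>a. \<Sum>\<^sub>\<infinity>b. g (a, b)) summable_on UNIV"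
    using summable_on_Sigma_banach[OF s'] by simp
  moreover have "(\<Sum>\<^sub>\<infinity>a. \<Sum>\<^sub>\<infinity>b. g (a, b)) = infsum g UNIV"
    using infsum_Sigma_banach[of g UNIV "\<lambda>_. UNIV"] s by simp
  ultimately show "((\<lambda>a. \<Sum>\<^sub>\<infinity>b. g (a, b)) has_sum infsum g UNIV) UNIV"
    by (simp add: has_sum_iff)
qed

lemma fubini_nn2:
  fixes g :: "'a \<times> 'b \<Rightarrow> real"
  assumes nn: "\<And>p. 0 \<le> g p" and h: "\<And>a. ((\<lambda>b. g (a, b)) has_sum h a) UNIV" and s: "h summable_on UNIV"
  shows "g summable_on UNIV"
  using summable_on_SigmaI[where A=UNIV and B="\<lambda>_. UNIV" and f=g and g=h] assms by simp

lemma fubini_nn_swap: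
  fixes g :: "'a \<times> 'b \<Rightarrow> real"
  shows "g summable_on UNIV \<longleftrightarrow> (\<lambda>(x,y). g (y,x)) summable_on UNIV"
    "infsum g UNIV = infsum (\<lambda>(x,y). g (y,x)) UNIV"
proof -
  have b: "bij_betw (\<lambda>(x,y). (y,x)) (UNIV :: ('b \<times> 'a) set) UNIV"
    by (rule bij_betwI[of _ _ _ "\<lambda>(x,y). (y,x)"]) auto
  show "g summable_on UNIV \<longleftrightarrow> (\<lambda>(x,y). g (y,x)) summable_on UNIV"
    using summable_on_reindex_bij_betw[OF b, of g] by (simp add: case_prod_unfold)
  show "infsum g UNIV = infsum (\<lambda>(x,y). g (y,x)) UNIV"
    using infsum_reindex_bij_betw[OF b, of g] by (simp add: case_prod_unfold)
qed

lemma hs_rows: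
  assumes x: "ell2 (unc x)"
  shows "\<And>i. ell2 (\<lambda>k. x i k)" "((\<lambda>i. (l2norm (\<lambda>k. x i k))^2) has_sum (hs_norm x)^2) UNIV"
proof -
  define g where "g p = (cmod (unc x p))^2" for p
  have s: "g summable_on UNIV" using x unfolding g_def ell2_def .
  show r: "ell2 (\<lambda>k. x i k)" for i
    using fubini_nn1(1)[OF _ s, of i] unfolding ell2_def g_def unc_def by simp
  have "((\<lambda>a. \<Sum>\<^sub>\<infinity>b. g (a, b)) has_sum infsum g UNIV) UNIV" by (rule fubini_nn1(2)[OF _ s]) (simp add: g_def)
  moreover have "(\<Sum>\<^sub>\<infinity>b. g (a, b)) = (l2norm (\<lambda>k. x a k))^2" for a unfolding l2norm_sq g_def unc_def by simp
  moreover have "infsum g UNIV = (hs_norm x)^2" unfolding hs_norm_eq l2norm_sq g_def ..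
  ultimately show "((\<lambda>i. (l2norm (\<lambda>k. x i k))^2) has_sum (hs_norm x)^2) UNIV" by simp
qed

definition tp :: "('r \<Rightarrow> 'c \<Rightarrow> complex) \<Rightarrow> 'c \<Rightarrow> 'r \<Rightarrow> complex" where
  "tp x = (\<lambda>i k. x k i)"

lemma ell2_unc_tp: "ell2 (unc (tp x)) \<longleftrightarrow> ell2 (unc x)"
  unfolding ell2_def unc_def tp_def using fubini_nn_swap(1)[of "\<lambda>p. (cmod (x (fst p) (snd p)))^2"]
  by (simp add: case_prod_unfold)

lemma hs_norm_tp: "hs_norm (tp x) = hs_norm x"
  unfolding hs_norm_eq l2norm_def unc_def tp_def using fubini_nn_swap(2)[of "\<lambda>p. (cmod (x (fst p) (snd p)))^2"]
  by (simp add: case_prod_unfold)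

lemma hs_cols:
  assumes x: "ell2 (unc x)"
  shows "\<And>k. ell2 (\<lambda>i. x i k)" "((\<lambda>k. (l2norm (\<lambda>i. x i k))^2) has_sum (hs_norm x)^2) UNIV"
  using hs_rows[of "tp x"] x unfolding ell2_unc_tp hs_norm_tp by (auto simp: tp_def)

lemma hs_from_rows:
  assumes r: "\<And>i. ell2 (\<lambda>k. x i k)" and s: "((\<lambda>i. (l2norm (\<lambda>k. x i k))^2) has_sum S) UNIV"
  shows "ell2 (unc x)" "(hs_norm x)^2 = S"
proof -
  define g where "g p = (cmod (unc x p))^2" for p
  have h: "((\<lambda>b. g (a, b)) has_sum (l2norm (\<lambda>k. x a k))^2) UNIV" for a
    using r[of a] unfolding g_def unc_def ell2_def l2norm_sq by (simp add: has_sum_infsum)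
  have gs: "g summable_on UNIV" by (rule fubini_nn2[OF _ h]) (use s g_def in \<open>auto simp: has_sum_iff\<close>)
  thus "ell2 (unc x)" unfolding ell2_def g_def .
  thus "(hs_norm x)^2 = S" using hs_rows(2)[of x] s by (simp add: has_sum_iff)
qed

lemma hs_from_cols:
  assumes r: "\<And>k. ell2 (\<lambda>i. x i k)" and s: "((\<lambda>k. (l2norm (\<lambda>i. x i k))^2) has_sum S) UNIV"
  shows "ell2 (unc x)" "(hs_norm x)^2 = S"
  using hs_from_rows[of "tp x" S] assms unfolding ell2_unc_tp hs_norm_tp by (auto simp: tp_def)


lemma infsum_diff':
  fixes f g :: "'a \<Rightarrow> 'b::{topological_ab_group_add,t2_space}"
  assumes "f summable_on A" "g summable_on A"
  shows "infsum (\<lambda>x. f x - g x) A = infsum f A - infsum g A"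
proof -
  have "infsum (\<lambda>x. f x + - g x) A = infsum f A + infsum (\<lambda>x. - g x) A"
    by (rule infsum_add) (use assms in \<open>auto simp: summable_on_uminus\<close>)
  thus ?thesis by (simp add: infsum_uminus)
qed

lemma summable_on_diff':
  fixes f g :: "'a \<Rightarrow> 'b::{topological_ab_group_add}"
  assumes "f summable_on A" "g summable_on A"
  shows "(\<lambda>x. f x - g x) summable_on A"
  using summable_on_add[OF assms(1) summable_on_uminus[THEN iffD2, OF assms(2)]] by simp

definition cnjm :: "('r \<Rightarrow> 'c \<Rightarrow> complex) \<Rightarrow> 'r \<Rightarrow> 'c \<Rightarrow> complex" where
  "cnjm x = (\<lambda>i k. cnj (x i k))"

lemma unc_cnjm: "unc (cnjm x) = (\<lambda>p. cnj (unc x p))"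
  unfolding unc_def cnjm_def ..

lemma ell2_unc_cnjm: "ell2 (unc (cnjm x)) \<longleftrightarrow> ell2 (unc x)"
  unfolding unc_cnjm ell2_def by simp

lemma hs_norm_cnjm: "hs_norm (cnjm x) = hs_norm x"
  unfolding hs_norm_eq unc_cnjm l2norm_cnj ..

lemma family_cols:
  assumes bdd: "\<And>j. bounded_mat (b j)" and S: "sot_sum_id (\<lambda>j. mat_mult (adj (b j)) (b j))"
    and y: "ell2 (unc y)"
  shows "\<And>j. ell2 (unc (\<lambda>i k. mat_apply (b j) (\<lambda>l. y l k) i))"
    "((\<lambda>j. (hs_norm (\<lambda>i k. mat_apply (b j) (\<lambda>l. y l k) i))^2) has_sum (hs_norm y)^2) UNIV"
proof -
  define g where "g p = (l2norm (mat_apply (b (fst p)) (\<lambda>l. y l (snd p))))^2" for p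
  have g0: "0 \<le> g p" for p unfolding g_def by simp
  have col: "ell2 (\<lambda>l. y l k)" for k by (rule hs_cols(1)[OF y])
  have hk: "((\<lambda>j. g (j, k)) has_sum (l2norm (\<lambda>l. y l k))^2) UNIV" for k
    unfolding g_def using sot_iso_norm[OF bdd S col] by simp
  have g'sum: "(\<lambda>(k,j). g (j,k)) summable_on UNIV"
  proof (rule fubini_nn2)
    show "((\<lambda>j. (\<lambda>(k,j). g (j,k)) (k, j)) has_sum (l2norm (\<lambda>l. y l k))^2) UNIV" for k using hk[of k] by simp
    show "(\<lambda>k. (l2norm (\<lambda>l. y l k))^2) summable_on UNIV" using hs_cols(2)[OF y] by (simp add: has_sum_iff)
  qed (simp add: g0 case_prod_unfold)
  have gsum: "g summable_on UNIV" using fubini_nn_swap(1)[of g] g'sum by simp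
  have tot: "infsum g UNIV = (hs_norm y)^2"
  proof -
    have "infsum g UNIV = infsum (\<lambda>(k,j). g (j,k)) UNIV" by (rule fubini_nn_swap(2))
    also have "\<dots> = (\<Sum>\<^sub>\<infinity>k. \<Sum>\<^sub>\<infinity>j. g (j,k))"
      using fubini_nn1(2)[OF _ g'sum] g0 by (simp add: case_prod_unfold has_sum_iff)
    also have "\<dots> = (\<Sum>\<^sub>\<infinity>k. (l2norm (\<lambda>l. y l k))^2)"
      using hk by (simp add: has_sum_iff)
    also have "\<dots> = (hs_norm y)^2" using hs_cols(2)[OF y] by (simp add: has_sum_iff)
    finally show ?thesis .
  qed
  have inner: "((\<lambda>k. g (j, k)) has_sum (\<Sum>\<^sub>\<infinity>k. g (j, k))) UNIV" for j
    using fubini_nn1(1)[OF g0 gsum] by (simp add: has_sum_infsum)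
  have cols: "ell2 (\<lambda>i. mat_apply (b j) (\<lambda>l. y l k) i)" for j k by (rule bdd_ell2[OF bdd col])
  have M: "ell2 (unc (\<lambda>i k. mat_apply (b j) (\<lambda>l. y l k) i)) \<and>
     (hs_norm (\<lambda>i k. mat_apply (b j) (\<lambda>l. y l k) i))^2 = (\<Sum>\<^sub>\<infinity>k. g (j, k))" for j
    using hs_from_cols[of "\<lambda>i k. mat_apply (b j) (\<lambda>l. y l k) i" "\<Sum>\<^sub>\<infinity>k. g (j, k)"] cols inner[of j]
    unfolding g_def by simp
  show "ell2 (unc (\<lambda>i k. mat_apply (b j) (\<lambda>l. y l k) i))" for j using M by blast
  have "((\<lambda>j. \<Sum>\<^sub>\<infinity>k. g (j, k)) has_sum infsum g UNIV) UNIV" by (rule fubini_nn1(2)[OF g0 gsum])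
  thus "((\<lambda>j. (hs_norm (\<lambda>i k. mat_apply (b j) (\<lambda>l. y l k) i))^2) has_sum (hs_norm y)^2) UNIV"
    using M tot by simp
qed

lemma mat_mult_left_eq: "mat_mult A x = (\<lambda>i k. mat_apply A (\<lambda>l. x l k) i)"
  unfolding mat_mult_def mat_apply_def ..

lemma mat_mult_right_eq: "mat_mult x A = tp (cnjm (\<lambda>k i. mat_apply (adj A) (\<lambda>l. cnj (x i l)) k))"
  unfolding mat_mult_def mat_apply_def tp_def cnjm_def adj_def
  by (auto intro!: ext simp: infsum_cnj[symmetric] mult.commute)

lemma family_left:
  assumes bdd: "\<And>j. bounded_mat (a j)" and S1: "sot_sum_id (\<lambda>j. mat_mult (adj (a j)) (a j))"
    and x: "ell2 (unc x)"
  shows "\<And>j. ell2 (unc (mat_mult (a j) x))" "((\<lambda>j. (hs_norm (mat_mult (a j) x))^2) has_sum (hs_norm x)^2) UNIV"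
  using family_cols[OF bdd S1 x] unfolding mat_mult_left_eq by auto

lemma family_right:
  assumes bdd: "\<And>j. bounded_mat (a j)" and S2: "sot_sum_id (\<lambda>j. mat_mult (a j) (adj (a j)))"
    and x: "ell2 (unc x)"
  shows "\<And>j. ell2 (unc (mat_mult x (a j)))" "((\<lambda>j. (hs_norm (mat_mult x (a j)))^2) has_sum (hs_norm x)^2) UNIV"
proof -
  have bdd': "\<And>j. bounded_mat (adj (a j))" by (rule adj_bounded[OF bdd])
  have S': "sot_sum_id (\<lambda>j. mat_mult (adj (adj (a j))) (adj (a j)))" using S2 by simp
  have y: "ell2 (unc (tp (cnjm x)))" using x by (simp add: ell2_unc_tp ell2_unc_cnjm)
  have e: "(\<lambda>k i. mat_apply (adj (a j)) (\<lambda>l. cnj (x i l)) k) = (\<lambda>i k. mat_apply (adj (a j)) (\<lambda>l. tp (cnjm x) l k) i)" for j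
    unfolding tp_def cnjm_def ..
  note fc = family_cols[OF bdd' S' y]
  show "ell2 (unc (mat_mult x (a j)))" for j
    unfolding mat_mult_right_eq e using fc(1)[of j] by (simp add: ell2_unc_tp ell2_unc_cnjm)
  show "((\<lambda>j. (hs_norm (mat_mult x (a j)))^2) has_sum (hs_norm x)^2) UNIV"
    unfolding mat_mult_right_eq e using fc(2) by (simp add: hs_norm_tp hs_norm_cnjm)
qed


lemma suminf_infsum: "(f :: nat \<Rightarrow> 'a::{topological_comm_monoid_add,t2_space}) summable_on UNIV \<Longrightarrow> suminf f = infsum f UNIV"
  using has_sum_imp_sums[OF has_sum_infsum] sums_unique by metis

lemma restr_self:
  assumes F: "finite F"
  shows "cinner (restr F w) w = of_real (\<Sum>i\<in>F. (cmod (w i))^2)"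
    "l2norm (restr F w) = sqrt (\<Sum>i\<in>F. (cmod (w i))^2)"
proof -
  have "cinner (restr F w) w = (\<Sum>\<^sub>\<infinity>i. if i \<in> F then cnj (w i) * w i else 0)"
    unfolding cinner_def restr_def by (intro infsum_cong) auto
  also have "\<dots> = (\<Sum>i\<in>F. cnj (w i) * w i)" by (rule infsum_restrict_fin[OF F])
  also have "\<dots> = of_real (\<Sum>i\<in>F. (cmod (w i))^2)"
    unfolding of_real_sum by (intro sum.cong refl) (rule cnj_mult_self)
  finally show "cinner (restr F w) w = of_real (\<Sum>i\<in>F. (cmod (w i))^2)" .
  show "l2norm (restr F w) = sqrt (\<Sum>i\<in>F. (cmod (w i))^2)"
    using l2norm_restrict_fin[OF F, of w] unfolding restr_def
    by (metis l2norm_nonneg real_sqrt_unique)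
qed

lemma seq_CS:
  fixes f :: "nat \<Rightarrow> complex" and \<alpha> \<beta> :: "nat \<Rightarrow> real"
  assumes a0: "\<And>j. 0 \<le> \<alpha> j" and b0: "\<And>j. 0 \<le> \<beta> j"
    and sa: "((\<lambda>j. (\<alpha> j)^2) has_sum A) UNIV" and sb: "((\<lambda>j. (\<beta> j)^2) has_sum B) UNIV"
    and le: "\<And>j. cmod (f j) \<le> \<alpha> j * \<beta> j"
  shows "f summable_on UNIV" "cmod (infsum f UNIV) \<le> sqrt A * sqrt B"
proof -
  define u where "u j = complex_of_real (\<alpha> j)" for j
  define v where "v j = complex_of_real (\<beta> j)" for j
  have ua: "(cmod (u j))^2 = (\<alpha> j)^2" for j unfolding u_def using a0[of j] by simp
  have vb: "(cmod (v j))^2 = (\<beta> j)^2" for j unfolding v_def using b0[of j] by simp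
  have u: "ell2 u" unfolding ell2_def ua using sa by (simp add: has_sum_iff)
  have v: "ell2 v" unfolding ell2_def vb using sb by (simp add: has_sum_iff)
  have le': "cmod (f j) \<le> cmod (u j) * cmod (v j)" for j
    unfolding u_def v_def using le[of j] a0[of j] b0[of j] by simp
  show "f summable_on UNIV" by (rule prod_summable[OF u v le'])
  have "cmod (infsum f UNIV) \<le> l2norm u * l2norm v" by (rule CS_gen[OF u v le'])
  also have "l2norm u = sqrt A" unfolding l2norm_def ua using sa by (simp add: has_sum_iff)
  also have "l2norm v = sqrt B" unfolding l2norm_def vb using sb by (simp add: has_sum_iff)
  finally show "cmod (infsum f UNIV) \<le> sqrt A * sqrt B" .
qed

context
  fixes a :: "nat \<Rightarrow> 'i \<Rightarrow> 'i \<Rightarrow> complex" and w :: "nat \<Rightarrow> 'i \<Rightarrow> complex" and W2 :: real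
  assumes bdd: "\<And>j. bounded_mat (a j)" and S1: "sot_sum_id (\<lambda>j. mat_mult (adj (a j)) (a j))"
    and w: "\<And>j. ell2 (w j)" and W: "((\<lambda>j. (l2norm (w j))^2) has_sum W2) UNIV"
begin

lemma VA1:
  assumes v: "ell2 v"
  shows "(\<lambda>j. cinner (mat_apply (a j) v) (w j)) summable_on UNIV"
    "cmod (\<Sum>\<^sub>\<infinity>j. cinner (mat_apply (a j) v) (w j)) \<le> l2norm v * sqrt W2"
proof -
  have sa: "((\<lambda>j. (l2norm (mat_apply (a j) v))^2) has_sum (l2norm v)^2) UNIV"
    by (rule sot_iso_norm[OF bdd S1 v])
  have le: "cmod (cinner (mat_apply (a j) v) (w j)) \<le> l2norm (mat_apply (a j) v) * l2norm (w j)" for j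
    by (rule CS[OF bdd_ell2[OF bdd v] w])
  note c = seq_CS[OF _ _ sa W le]
  show "(\<lambda>j. cinner (mat_apply (a j) v) (w j)) summable_on UNIV" using c by simp
  show "cmod (\<Sum>\<^sub>\<infinity>j. cinner (mat_apply (a j) v) (w j)) \<le> l2norm v * sqrt W2" using c by simp
qed

definition zz :: "'i \<Rightarrow> complex" where "zz = (\<lambda>i. \<Sum>\<^sub>\<infinity>j. cinner (\<lambda>l. a j l i) (w j))"

lemma VA_col_summable: "(\<lambda>j. cinner (\<lambda>l. a j l i) (w j)) summable_on UNIV"
  using VA1(1)[OF ell2_ebas[of i]] by (simp add: mat_apply_ebas)

lemma VA_fin:
  assumes F: "finite F"
  shows "cinner (restr F u) zz = (\<Sum>\<^sub>\<infinity>j. cinner (mat_apply (a j) (restr F u)) (w j))"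
proof -
  have "cinner (restr F u) zz = (\<Sum>\<^sub>\<infinity>i. if i \<in> F then cnj (u i) * zz i else 0)"
    unfolding cinner_def restr_def by (intro infsum_cong) auto
  also have "\<dots> = (\<Sum>i\<in>F. cnj (u i) * zz i)" by (rule infsum_restrict_fin[OF F])
  also have "\<dots> = (\<Sum>i\<in>F. \<Sum>\<^sub>\<infinity>j. cnj (u i) * cinner (\<lambda>l. a j l i) (w j))"
    unfolding zz_def by (intro sum.cong refl infsum_cmult_right[symmetric] VA_col_summable)
  also have "\<dots> = (\<Sum>\<^sub>\<infinity>j. \<Sum>i\<in>F. cnj (u i) * cinner (\<lambda>l. a j l i) (w j))"
    by (rule infsum_finsum[OF F]) (intro summable_on_cmult_right VA_col_summable)
  also have "\<dots> = (\<Sum>\<^sub>\<infinity>j. cinner (mat_apply (a j) (restr F u)) (w j))"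
  proof (intro infsum_cong)
    fix j
    have hs: "((\<lambda>i. cnj (restr F u i) * cinner (\<lambda>l. a j l i) (w j)) has_sum cinner (mat_apply (a j) (restr F u)) (w j)) UNIV"
    proof -
      have "ell2 (restr F u)" unfolding restr_def by (rule ell2_restrict_fin[OF F])
      thus ?thesis by (rule adjoint_has_sum[OF bdd _ w])
    qed
    have "(\<Sum>\<^sub>\<infinity>i. cnj (restr F u i) * cinner (\<lambda>l. a j l i) (w j)) = (\<Sum>\<^sub>\<infinity>i. if i \<in> F then cnj (u i) * cinner (\<lambda>l. a j l i) (w j) else 0)"
      unfolding restr_def by (intro infsum_cong) auto
    also have "\<dots> = (\<Sum>i\<in>F. cnj (u i) * cinner (\<lambda>l. a j l i) (w j))" by (rule infsum_restrict_fin[OF F])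
    finally show "(\<Sum>i\<in>F. cnj (u i) * cinner (\<lambda>l. a j l i) (w j)) = cinner (mat_apply (a j) (restr F u)) (w j)"
      using hs by (simp add: infsumI)
  qed
  finally show ?thesis .
qed

lemma W2_nonneg: "0 \<le> W2"
  using W has_sum_nonneg by (metis zero_le_power2)

lemma VA_ell2: "ell2 zz" and VA_norm: "l2norm zz \<le> sqrt W2"
proof -
  have H: "(\<Sum>i\<in>F. (cmod (zz i))^2) \<le> sqrt W2 * sqrt (\<Sum>i\<in>F. (cmod (zz i))^2)" if F: "finite F" for F
  proof -
    have r: "ell2 (restr F zz)" unfolding restr_def by (rule ell2_restrict_fin[OF F])
    have "(\<Sum>i\<in>F. (cmod (zz i))^2) = cmod (cinner (restr F zz) zz)"
      unfolding restr_self(1)[OF F] norm_of_real by (simp add: sum_nonneg)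
    also have "\<dots> = cmod (\<Sum>\<^sub>\<infinity>j. cinner (mat_apply (a j) (restr F zz)) (w j))" by (simp add: VA_fin[OF F])
    also have "\<dots> \<le> l2norm (restr F zz) * sqrt W2" by (rule VA1(2)[OF r])
    finally show ?thesis unfolding restr_self(2)[OF F] by (simp add: mult.commute)
  qed
  show "ell2 zz" "l2norm zz \<le> sqrt W2" using dual_bound[OF _ H] W2_nonneg by auto
qed

lemma VA_has_sum:
  assumes v: "ell2 v"
  shows "((\<lambda>j. cinner (mat_apply (a j) v) (w j)) has_sum cinner v zz) UNIV"
proof -
  define D where "D u = (\<Sum>\<^sub>\<infinity>j. cinner (mat_apply (a j) u) (w j)) - cinner u zz" for u
  have Dfin: "D (restr F v) = 0" if "finite F" for F unfolding D_def using VA_fin[OF that] by simp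
  have Dbound: "cmod (D u) \<le> (sqrt W2 + l2norm zz) * l2norm u" if u: "ell2 u" for u
  proof -
    have "cmod (D u) \<le> cmod (\<Sum>\<^sub>\<infinity>j. cinner (mat_apply (a j) u) (w j)) + cmod (cinner u zz)"
      unfolding D_def by (rule norm_triangle_ineq4)
    also have "\<dots> \<le> l2norm u * sqrt W2 + l2norm u * l2norm zz"
      by (intro add_mono VA1(2)[OF u] CS[OF u VA_ell2])
    finally show ?thesis by (simp add: algebra_simps)
  qed
  have Dlin: "D v - D (restr F v) = D (\<lambda>i. v i - restr F v i)" if F: "finite F" for F
  proof -
    have r: "ell2 (restr F v)" by (rule ell2_restr[OF v])
    have d: "ell2 (\<lambda>i. v i - restr F v i)" by (rule ell2_diff[OF v r])
    have m: "mat_apply (a j) (\<lambda>i. v i - restr F v i) = (\<lambda>i. mat_apply (a j) v i - mat_apply (a j) (restr F v) i)" for j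
      by (rule mat_apply_diff[OF bdd v r])
    have c: "cinner (mat_apply (a j) (\<lambda>i. v i - restr F v i)) (w j)
        = cinner (mat_apply (a j) v) (w j) - cinner (mat_apply (a j) (restr F v)) (w j)" for j
      unfolding m by (rule cinner_diff_left[OF bdd_ell2[OF bdd v] bdd_ell2[OF bdd r] w])
    have "(\<Sum>\<^sub>\<infinity>j. cinner (mat_apply (a j) (\<lambda>i. v i - restr F v i)) (w j))
       = (\<Sum>\<^sub>\<infinity>j. cinner (mat_apply (a j) v) (w j)) - (\<Sum>\<^sub>\<infinity>j. cinner (mat_apply (a j) (restr F v)) (w j))"
      unfolding c by (rule infsum_diff'[OF VA1(1)[OF v] VA1(1)[OF r]])
    moreover have "cinner (\<lambda>i. v i - restr F v i) zz = cinner v zz - cinner (restr F v) zz"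
      by (rule cinner_diff_left[OF v r VA_ell2])
    ultimately show ?thesis unfolding D_def by simp
  qed
  have bnd: "norm (D v) \<le> (sqrt W2 + l2norm zz) * l2norm (\<lambda>i. v i - restr F v i)" if F: "finite F" for F
  proof -
    have e: "D v = D (\<lambda>i. v i - restr F v i)" using Dlin[OF F] Dfin[OF F] by simp
    show ?thesis unfolding e by (rule Dbound[OF ell2_diff[OF v ell2_restr[OF v]]])
  qed
  have "((\<lambda>F. D v) \<longlongrightarrow> 0) (finite_subsets_at_top (UNIV :: 'i set))"
  proof (rule Lim_null_comparison[where g="\<lambda>F. (sqrt W2 + l2norm zz) * l2norm (\<lambda>i. v i - restr F v i)"])
    show "\<forall>\<^sub>F F in finite_subsets_at_top UNIV. norm (D v) \<le> (sqrt W2 + l2norm zz) * l2norm (\<lambda>i. v i - restr F v i)"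
      using bnd by (simp add: eventually_finite_subsets_at_top_weakI)
    show "((\<lambda>F. (sqrt W2 + l2norm zz) * l2norm (\<lambda>i. v i - restr F v i)) \<longlongrightarrow> 0) (finite_subsets_at_top UNIV)"
      using tendsto_mult_right_zero[OF tail_tendsto[OF v]] by simp
  qed
  hence "D v = 0" by (simp add: tendsto_const_iff finite_subsets_at_top_neq_bot)
  hence "(\<Sum>\<^sub>\<infinity>j. cinner (mat_apply (a j) v) (w j)) = cinner v zz" unfolding D_def by simp
  thus ?thesis using VA1(1)[OF v] by (simp add: has_sum_iff)
qed

end


lemma adj_mult_entry: "mat_mult (adj A) Y i k = cinner (\<lambda>l. A l i) (\<lambda>l. Y l k)"
  unfolding mat_mult_def adj_def cinner_def ..

context
  fixes a :: "nat \<Rightarrow> 'i \<Rightarrow> 'i \<Rightarrow> complex" and Y :: "nat \<Rightarrow> 'i \<Rightarrow> 'i \<Rightarrow> complex" and W2 :: real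
  assumes bdd: "\<And>j. bounded_mat (a j)" and S1: "sot_sum_id (\<lambda>j. mat_mult (adj (a j)) (a j))"
    and Y: "\<And>j. ell2 (unc (Y j))" and W: "((\<lambda>j. (hs_norm (Y j))^2) has_sum W2) UNIV"
begin

definition gY :: "nat \<times> 'i \<Rightarrow> real" where "gY p = (l2norm (\<lambda>l. Y (fst p) l (snd p)))^2"

lemma gY0: "0 \<le> gY p" unfolding gY_def by simp

lemma gY_sum: "gY summable_on UNIV"
proof (rule fubini_nn2[OF gY0])
  show "((\<lambda>k. gY (j, k)) has_sum (hs_norm (Y j))^2) UNIV" for j
    unfolding gY_def using hs_cols(2)[OF Y] by simp
  show "(\<lambda>j. (hs_norm (Y j))^2) summable_on UNIV" using W by (simp add: has_sum_iff)
qed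

lemma gY_tot: "infsum gY UNIV = W2"
proof -
  have "((\<lambda>j. \<Sum>\<^sub>\<infinity>k. gY (j, k)) has_sum infsum gY UNIV) UNIV" by (rule fubini_nn1(2)[OF gY0 gY_sum])
  moreover have "(\<Sum>\<^sub>\<infinity>k. gY (j, k)) = (hs_norm (Y j))^2" for j
    unfolding gY_def using hs_cols(2)[OF Y] by (simp add: has_sum_iff)
  ultimately show ?thesis using W has_sum_unique by fastforce
qed

definition Wk :: "'i \<Rightarrow> real" where "Wk k = (\<Sum>\<^sub>\<infinity>j. gY (j, k))"

lemma gY'_sum: "(\<lambda>(k,j). gY (j,k)) summable_on UNIV"
  using fubini_nn_swap(1)[of gY] gY_sum by simp

lemma Wk_has: "((\<lambda>j. (l2norm (\<lambda>l. Y j l k))^2) has_sum Wk k) UNIV"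
proof -
  have "(\<lambda>j. (\<lambda>(k,j). gY (j,k)) (k, j)) summable_on UNIV"
    by (rule fubini_nn1(1)[OF _ gY'_sum]) (simp add: gY0 case_prod_unfold)
  thus ?thesis unfolding Wk_def gY_def by (simp add: has_sum_infsum)
qed

lemma Wk_sum: "(Wk has_sum W2) UNIV"
proof -
  have "((\<lambda>k. \<Sum>\<^sub>\<infinity>j. (\<lambda>(k,j). gY (j,k)) (k, j)) has_sum infsum (\<lambda>(k,j). gY (j,k)) UNIV) UNIV"
    by (rule fubini_nn1(2)[OF _ gY'_sum]) (simp add: gY0 case_prod_unfold)
  moreover have "infsum (\<lambda>(k,j). gY (j,k)) UNIV = W2"
    using fubini_nn_swap(2)[of gY] gY_tot by simp
  ultimately show ?thesis unfolding Wk_def by simp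
qed

lemma Wk0: "0 \<le> Wk k" unfolding Wk_def by (rule infsum_nonneg) (simp add: gY0)

definition ZZ :: "'i \<Rightarrow> 'i \<Rightarrow> complex" where "ZZ = (\<lambda>i k. \<Sum>\<^sub>\<infinity>j. mat_mult (adj (a j)) (Y j) i k)"

lemma colY: "ell2 (\<lambda>l. Y j l k)" by (rule hs_cols(1)[OF Y])

lemma ZZ_col: "(\<lambda>i. ZZ i k) = zz a (\<lambda>j l. Y j l k)"
  unfolding ZZ_def adj_mult_entry using zz_def[OF bdd S1 colY Wk_has] by simp

lemma MA_summable: "(\<lambda>j. mat_mult (adj (a j)) (Y j) i k) summable_on UNIV"
  unfolding adj_mult_entry by (rule VA_col_summable[OF bdd S1 colY Wk_has])

lemma MA_has_sum: "ell2 v \<Longrightarrow> ((\<lambda>j. cinner (mat_apply (a j) v) (\<lambda>l. Y j l k)) has_sum cinner v (\<lambda>i. ZZ i k)) UNIV"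
  unfolding ZZ_col by (rule VA_has_sum[OF bdd S1 colY Wk_has])

lemma ZZ_col_ell2: "ell2 (\<lambda>i. ZZ i k)"
  unfolding ZZ_col by (rule VA_ell2[OF bdd S1 colY Wk_has])

lemma ZZ_col_norm: "(l2norm (\<lambda>i. ZZ i k))^2 \<le> Wk k"
proof -
  have "l2norm (\<lambda>i. ZZ i k) \<le> sqrt (Wk k)" unfolding ZZ_col by (rule VA_norm[OF bdd S1 colY Wk_has])
  hence "(l2norm (\<lambda>i. ZZ i k))^2 \<le> (sqrt (Wk k))^2" by (rule power_mono) simp
  thus ?thesis using Wk0 by simp
qed

lemma MA_ell2: "ell2 (unc ZZ)" and MA_norm: "(hs_norm ZZ)^2 \<le> W2"
proof -
  have s: "(\<lambda>k. (l2norm (\<lambda>i. ZZ i k))^2) summable_on UNIV"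
    by (rule summable_on_comparison_test[of Wk]) (use Wk_sum ZZ_col_norm in \<open>auto simp: has_sum_iff\<close>)
  note h = hs_from_cols[of ZZ, OF ZZ_col_ell2 has_sum_infsum[OF s]]
  show "ell2 (unc ZZ)" using h by simp
  have "(hs_norm ZZ)^2 = (\<Sum>\<^sub>\<infinity>k. (l2norm (\<lambda>i. ZZ i k))^2)" using h by simp
  also have "\<dots> \<le> infsum Wk UNIV" by (rule infsum_mono[OF s]) (use Wk_sum ZZ_col_norm in \<open>auto simp: has_sum_iff\<close>)
  also have "\<dots> = W2" using Wk_sum by (simp add: has_sum_iff)
  finally show "(hs_norm ZZ)^2 \<le> W2" .
qed

end


lemma unc_diff: "unc (\<lambda>i k. P i k - Q i k) = (\<lambda>p. unc P p - unc Q p)"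
  unfolding unc_def ..

lemma cinner_ebas: "cinner (ebas i) w = w i"
proof -
  have "(\<lambda>j. cnj (ebas i j) * w j) = (\<lambda>j. if j = i then w j else 0)" by (auto simp: ebas_def)
  thus ?thesis unfolding cinner_def using infsum_single_point[of i w] by simp
qed

lemma cinner_unc_cols:
  assumes P: "ell2 (unc P)" and Q: "ell2 (unc Q)"
  shows "(\<lambda>k. cinner (\<lambda>i. P i k) (\<lambda>i. Q i k)) summable_on UNIV"
    "cinner (unc P) (unc Q) = (\<Sum>\<^sub>\<infinity>k. cinner (\<lambda>i. P i k) (\<lambda>i. Q i k))"
proof -
  define f where "f p = cnj (unc P p) * unc Q p" for p
  have fs: "f summable_on UNIV" unfolding f_def by (rule cinner_summable[OF P Q])
  have b: "bij_betw (\<lambda>(x,y). (y,x)) (UNIV :: ('b \<times> 'a) set) UNIV"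
    by (rule bij_betwI[of _ _ _ "\<lambda>(x,y). (y,x)"]) auto
  have f's: "(\<lambda>(k,i). f (i,k)) summable_on UNIV"
    using summable_on_reindex_bij_betw[OF b, of f] fs by (simp add: case_prod_unfold)
  have f'eq: "infsum (\<lambda>(k,i). f (i,k)) UNIV = infsum f UNIV"
    using infsum_reindex_bij_betw[OF b, of f] by (simp add: case_prod_unfold)
  have f's': "(\<lambda>(k,i). f (i,k)) summable_on Sigma UNIV (\<lambda>_. UNIV)" using f's by simp
  have inner: "(\<Sum>\<^sub>\<infinity>i. f (i,k)) = cinner (\<lambda>i. P i k) (\<lambda>i. Q i k)" for k
    unfolding f_def cinner_def unc_def by simp
  show "(\<lambda>k. cinner (\<lambda>i. P i k) (\<lambda>i. Q i k)) summable_on UNIV"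
    using summable_on_Sigma_banach[OF f's'] inner by simp
  have "(\<Sum>\<^sub>\<infinity>k. \<Sum>\<^sub>\<infinity>i. f (i,k)) = infsum (\<lambda>(k,i). f (i,k)) (Sigma UNIV (\<lambda>_. UNIV))"
    by (rule infsum_Sigma'_banach[OF f's'])
  thus "cinner (unc P) (unc Q) = (\<Sum>\<^sub>\<infinity>k. cinner (\<lambda>i. P i k) (\<lambda>i. Q i k))"
    using f'eq inner unfolding cinner_def f_def[symmetric] by simp
qed

context
  fixes a :: "nat \<Rightarrow> 'i \<Rightarrow> 'i \<Rightarrow> complex" and x :: "'i \<Rightarrow> 'i \<Rightarrow> complex"
  assumes bdd: "\<And>j. bounded_mat (a j)" and S1: "sot_sum_id (\<lambda>j. mat_mult (adj (a j)) (a j))"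
    and S2: "sot_sum_id (\<lambda>j. mat_mult (a j) (adj (a j)))"
    and x: "ell2 (unc x)"
begin

abbreviation "Y1 \<equiv> (\<lambda>j. mat_mult x (a j))"
abbreviation "Y2 \<equiv> (\<lambda>j. mat_mult (a j) x)"

lemma Y1: "ell2 (unc (Y1 j))" by (rule family_right(1)[OF bdd S2 x])
lemma Y2: "ell2 (unc (Y2 j))" by (rule family_left(1)[OF bdd S1 x])
lemma W1: "((\<lambda>j. (hs_norm (Y1 j))^2) has_sum (hs_norm x)^2) UNIV" by (rule family_right(2)[OF bdd S2 x])
lemma W2: "((\<lambda>j. (hs_norm (Y2 j))^2) has_sum (hs_norm x)^2) UNIV" by (rule family_left(2)[OF bdd S1 x])

lemma Psi_eq: "Psi a x = ZZ a Y1"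
proof (intro ext)
  fix i k
  have "(\<lambda>j. mat_mult (adj (a j)) (Y1 j) i k) summable_on UNIV" by (rule MA_summable[OF bdd S1 Y1 W1])
  thus "Psi a x i k = ZZ a Y1 i k"
    unfolding Psi_def ZZ_def[OF bdd S1 Y1 W1] by (simp add: suminf_infsum)
qed

lemma Psi_ell2: "ell2 (unc (Psi a x))"
  unfolding Psi_eq by (rule MA_ell2[OF bdd S1 Y1 W1])

lemma Psi_norm: "hs_norm (Psi a x) \<le> hs_norm x"
proof -
  have "(hs_norm (Psi a x))^2 \<le> (hs_norm x)^2" unfolding Psi_eq by (rule MA_norm[OF bdd S1 Y1 W1])
  thus ?thesis by (rule power2_le_imp_le) (simp add: hs_norm_eq)
qed

lemma Psi_col_has_sum:
  "ell2 v \<Longrightarrow> ((\<lambda>j. cinner (mat_apply (a j) v) (\<lambda>l. Y1 j l k)) has_sum cinner v (\<lambda>i. Psi a x i k)) UNIV"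
  unfolding Psi_eq by (rule MA_has_sum[OF bdd S1 Y1 W1])

lemma colx: "ell2 (\<lambda>l. x l k)" by (rule hs_cols(1)[OF x])

lemma KI: "((\<lambda>j. cinner (unc (Y2 j)) (unc (Y1 j))) has_sum cinner (unc x) (unc (Psi a x))) UNIV"
proof -
  define c where "c j k = cinner (\<lambda>i. Y2 j i k) (\<lambda>i. Y1 j i k)" for j k
  define \<alpha> where "\<alpha> p = complex_of_real (l2norm (\<lambda>l. Y2 (fst p) l (snd p)))" for p
  define \<beta> where "\<beta> p = complex_of_real (l2norm (\<lambda>l. Y1 (fst p) l (snd p)))" for p
  have \<alpha>: "ell2 \<alpha>" unfolding ell2_def \<alpha>_def using gY_sum[OF bdd S1 Y2 W2] unfolding gY_def[OF bdd S1 Y2 W2] by simp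
  have \<beta>: "ell2 \<beta>" unfolding ell2_def \<beta>_def using gY_sum[OF bdd S1 Y1 W1] unfolding gY_def[OF bdd S1 Y1 W1] by simp
  have cs: "(\<lambda>(j,k). c j k) summable_on UNIV"
  proof (rule prod_summable[OF \<alpha> \<beta>])
    fix p :: "nat \<times> 'i"
    obtain j k where p: "p = (j,k)" by fastforce
    show "cmod ((\<lambda>(j,k). c j k) p) \<le> cmod (\<alpha> p) * cmod (\<beta> p)"
      unfolding p c_def \<alpha>_def \<beta>_def using CS[OF hs_cols(1)[OF Y2] hs_cols(1)[OF Y1]] by simp
  qed
  have cs': "(\<lambda>(j,k). c j k) summable_on (UNIV \<times> UNIV)" using cs by simp
  have A: "cinner (unc (Y2 j)) (unc (Y1 j)) = (\<Sum>\<^sub>\<infinity>k. c j k)" for j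
    unfolding c_def by (rule cinner_unc_cols(2)[OF Y2 Y1])
  have B: "((\<lambda>j. c j k) has_sum cinner (\<lambda>l. x l k) (\<lambda>i. Psi a x i k)) UNIV" for k
    unfolding c_def using Psi_col_has_sum[OF colx, of k] by (simp add: mat_mult_left_eq)
  have C: "cinner (unc x) (unc (Psi a x)) = (\<Sum>\<^sub>\<infinity>k. cinner (\<lambda>l. x l k) (\<lambda>i. Psi a x i k))"
    by (rule cinner_unc_cols(2)[OF x Psi_ell2])
  have "(\<Sum>\<^sub>\<infinity>j. \<Sum>\<^sub>\<infinity>k. c j k) = (\<Sum>\<^sub>\<infinity>k. \<Sum>\<^sub>\<infinity>j. c j k)" by (rule infsum_swap_banach[OF cs'])
  also have "\<dots> = cinner (unc x) (unc (Psi a x))" unfolding C using B by (simp add: has_sum_iff)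
  finally have v: "(\<Sum>\<^sub>\<infinity>j. cinner (unc (Y2 j)) (unc (Y1 j))) = cinner (unc x) (unc (Psi a x))" unfolding A .
  have "(\<lambda>j. \<Sum>\<^sub>\<infinity>k. c j k) summable_on UNIV"
    using summable_on_Sigma_banach[of c UNIV "\<lambda>_. UNIV"] cs' by simp
  thus ?thesis using v unfolding A[symmetric] by (simp add: has_sum_iff)
qed


abbreviation "Yd \<equiv> (\<lambda>j i k. Y1 j i k - Y2 j i k)"

lemma Yd: "ell2 (unc (Yd j))"
  unfolding unc_diff by (rule ell2_diff[OF Y1 Y2])

lemma Yd_expand: "(hs_norm (Yd j))^2 = (hs_norm (Y1 j))^2 + (hs_norm (Y2 j))^2 - 2 * Re (cinner (unc (Y2 j)) (unc (Y1 j)))"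
proof -
  have e: "unc (Yd j) = (\<lambda>p. unc (Y1 j) p + (- unc (Y2 j) p))" unfolding unc_diff by simp
  have "(hs_norm (Yd j))^2 = (l2norm (unc (Y1 j)))^2 + 2 * Re (cinner (unc (Y1 j)) (\<lambda>p. - unc (Y2 j) p)) + (l2norm (\<lambda>p. - unc (Y2 j) p))^2"
    unfolding hs_norm_eq e by (rule l2norm_sq_expand[OF Y1 ell2_uminus[OF Y2]])
  also have "cinner (unc (Y1 j)) (\<lambda>p. - unc (Y2 j) p) = - cnj (cinner (unc (Y2 j)) (unc (Y1 j)))"
    using cinner_uminus_right[OF Y1 Y2] cinner_swap[of "unc (Y1 j)" "unc (Y2 j)"] by simp
  finally show ?thesis by (simp add: l2norm_uminus hs_norm_eq)
qed

lemma Yd_le: "(hs_norm (Yd j))^2 \<le> 2 * (hs_norm (Y1 j))^2 + 2 * (hs_norm (Y2 j))^2"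
proof -
  have "hs_norm (Yd j) \<le> hs_norm (Y1 j) + hs_norm (Y2 j)"
    unfolding hs_norm_eq unc_diff by (rule l2norm_triangle_diff[OF Y1 Y2])
  hence "(hs_norm (Yd j))^2 \<le> (hs_norm (Y1 j) + hs_norm (Y2 j))^2"
    by (rule power_mono) (simp add: hs_norm_eq)
  also have "\<dots> \<le> 2 * (hs_norm (Y1 j))^2 + 2 * (hs_norm (Y2 j))^2" by (rule sq_sum_le)
  finally show ?thesis .
qed

definition Wd where "Wd = 2 * (hs_norm x)^2 - 2 * Re (cinner (unc x) (unc (Psi a x)))"

lemma Wd_has: "((\<lambda>j. (hs_norm (Yd j))^2) has_sum Wd) UNIV"
proof -
  have h1: "((\<lambda>j. (hs_norm (Y1 j))^2 + (hs_norm (Y2 j))^2) has_sum ((hs_norm x)^2 + (hs_norm x)^2)) UNIV"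
    by (rule has_sum_add[OF W1 W2])
  have h2: "((\<lambda>j. (-2) * Re (cinner (unc (Y2 j)) (unc (Y1 j)))) has_sum (-2) * Re (cinner (unc x) (unc (Psi a x)))) UNIV"
    by (rule has_sum_cmult_right[OF has_sum_Re[OF KI]])
  have "((\<lambda>j. ((hs_norm (Y1 j))^2 + (hs_norm (Y2 j))^2) - 2 * Re (cinner (unc (Y2 j)) (unc (Y1 j)))) has_sum
      (((hs_norm x)^2 + (hs_norm x)^2) - 2 * Re (cinner (unc x) (unc (Psi a x))))) UNIV"
    using has_sum_add[OF h1 h2] by simp
  thus ?thesis unfolding Yd_expand Wd_def by simp
qed

lemma entry2: "((\<lambda>j. mat_mult (adj (a j)) (Y2 j) i k) has_sum x i k) UNIV"
proof -
  have "((\<lambda>j. cinner (mat_apply (a j) (ebas i)) (mat_apply (a j) (\<lambda>l. x l k))) has_sum cinner (ebas i) (\<lambda>l. x l k)) UNIV"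
    by (rule sot_iso_has_sum[OF bdd S1 ell2_ebas colx])
  thus ?thesis unfolding adj_mult_entry cinner_ebas mat_apply_ebas by (simp add: mat_mult_left_eq)
qed

lemma PsiMinus: "(\<lambda>i k. Psi a x i k - x i k) = ZZ a Yd"
proof (intro ext)
  fix i k
  have e: "mat_mult (adj (a j)) (Yd j) i k = mat_mult (adj (a j)) (Y1 j) i k - mat_mult (adj (a j)) (Y2 j) i k" for j
    unfolding adj_mult_entry by (rule cinner_diff_right[OF col_ell2[OF bdd] hs_cols(1)[OF Y1] hs_cols(1)[OF Y2]])
  have s1: "(\<lambda>j. mat_mult (adj (a j)) (Y1 j) i k) summable_on UNIV" by (rule MA_summable[OF bdd S1 Y1 W1])
  have "ZZ a Yd i k = (\<Sum>\<^sub>\<infinity>j. mat_mult (adj (a j)) (Y1 j) i k) - (\<Sum>\<^sub>\<infinity>j. mat_mult (adj (a j)) (Y2 j) i k)"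
    unfolding ZZ_def[OF bdd S1 Yd Wd_has] e
    by (rule infsum_diff'[OF s1 has_sum_imp_summable[OF entry2]])
  also have "\<dots> = Psi a x i k - x i k"
    using Psi_eq ZZ_def[OF bdd S1 Y1 W1] entry2[of i k] by (simp add: has_sum_iff)
  finally show "Psi a x i k - x i k = ZZ a Yd i k" by simp
qed

lemma PsiMinus_norm: "(hs_norm (\<lambda>i k. Psi a x i k - x i k))^2 \<le> Wd"
  unfolding PsiMinus by (rule MA_norm[OF bdd S1 Yd Wd_has])

lemma commut_props: "ell2 (unc (commut a x))" "(hs_norm (commut a x))^2 = Wd"
proof -
  define h where "h p = (cmod (unc (Yd (fst p)) (snd p)))^2" for p :: "nat \<times> 'i \<times> 'i"
  have h0: "0 \<le> h p" for p unfolding h_def by simp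
  have hj: "((\<lambda>q. h (j, q)) has_sum (hs_norm (Yd j))^2) UNIV" for j
    unfolding h_def hs_norm_eq l2norm_sq using Yd[of j] unfolding ell2_def by (simp add: has_sum_infsum)
  have hs: "h summable_on UNIV"
    by (rule fubini_nn2[OF h0 hj]) (use Wd_has in \<open>simp add: has_sum_iff\<close>)
  have htot: "infsum h UNIV = Wd"
  proof -
    have "((\<lambda>j. \<Sum>\<^sub>\<infinity>q. h (j, q)) has_sum infsum h UNIV) UNIV" by (rule fubini_nn1(2)[OF h0 hs])
    moreover have "(\<Sum>\<^sub>\<infinity>q. h (j, q)) = (hs_norm (Yd j))^2" for j using hj[of j] by (simp add: has_sum_iff)
    ultimately show ?thesis using Wd_has has_sum_unique by fastforce
  qed
  define \<beta> where "\<beta> q = (fst (fst q), (snd (fst q), snd q))" for q :: "(nat \<times> 'i) \<times> 'i"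
  have b: "bij_betw \<beta> UNIV UNIV"
    by (rule bij_betwI[of _ _ _ "\<lambda>p. ((fst p, fst (snd p)), snd (snd p))"]) (auto simp: \<beta>_def)
  have e: "(cmod (unc (commut a x) q))^2 = h (\<beta> q)" for q
  proof -
    have "unc (commut a x) q = - unc (Yd (fst (fst q))) (snd (fst q), snd q)"
      unfolding unc_def commut_def by simp
    thus ?thesis unfolding h_def \<beta>_def by simp
  qed
  show "ell2 (unc (commut a x))"
    unfolding ell2_def e using summable_on_reindex_bij_betw[OF b, of h] hs by simp
  have "(hs_norm (commut a x))^2 = (\<Sum>\<^sub>\<infinity>q. h (\<beta> q))" unfolding hs_norm_eq l2norm_sq e ..
  also have "\<dots> = infsum h UNIV" by (rule infsum_reindex_bij_betw[OF b])
  finally show "(hs_norm (commut a x))^2 = Wd" using htot by simp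
qed

lemma part2a: "(hs_norm (commut a x))^2 \<le> 2 * hs_norm (\<lambda>i k. x i k - Psi a x i k) * hs_norm x"
proof -
  have ux: "ell2 (unc x)" by (rule x)
  have uP: "ell2 (unc (Psi a x))" by (rule Psi_ell2)
  have c: "cinner (unc x) (unc (\<lambda>i k. x i k - Psi a x i k)) = cinner (unc x) (unc x) - cinner (unc x) (unc (Psi a x))"
    unfolding unc_diff by (rule cinner_diff_right[OF ux ux uP])
  have "Wd = 2 * Re (cinner (unc x) (unc (\<lambda>i k. x i k - Psi a x i k)))"
    unfolding Wd_def c using cinner_self[OF ux] by (simp add: hs_norm_eq)
  also have "\<dots> \<le> 2 * (l2norm (unc x) * l2norm (unc (\<lambda>i k. x i k - Psi a x i k)))"
  proof -
    have "ell2 (unc (\<lambda>i k. x i k - Psi a x i k))" unfolding unc_diff by (rule ell2_diff[OF ux uP])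
    from CS[OF ux this] complex_Re_le_cmod[of "cinner (unc x) (unc (\<lambda>i k. x i k - Psi a x i k))"]
    show ?thesis by linarith
  qed
  finally show ?thesis using commut_props(2) by (simp add: hs_norm_eq mult_ac)
qed

lemma part2b: "hs_norm (\<lambda>i k. Psi a x i k - x i k) \<le> hs_norm (commut a x)"
proof -
  have "(hs_norm (\<lambda>i k. Psi a x i k - x i k))^2 \<le> (hs_norm (commut a x))^2"
    using PsiMinus_norm commut_props(2) by simp
  thus ?thesis by (rule power2_le_imp_le) (simp add: hs_norm_eq)
qed

end


typedef 'a vec2 = "{v :: 'a \<Rightarrow> complex. ell2 v}" morphisms vrep vabs
  by (rule exI[of _ "\<lambda>_. 0"]) simp

lemma vrep_ell2: "ell2 (vrep v)" using vrep by auto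
lemma vrep_vabs: "ell2 v \<Longrightarrow> vrep (vabs v) = v" by (simp add: vabs_inverse)


instantiation vec2 :: (type) real_inner
begin

definition zero_vec2 :: "'a vec2" where "zero_vec2 = vabs (\<lambda>i. 0)"
definition plus_vec2 :: "'a vec2 \<Rightarrow> 'a vec2 \<Rightarrow> 'a vec2" where "plus_vec2 u v = vabs (\<lambda>i. vrep u i + vrep v i)"
definition uminus_vec2 :: "'a vec2 \<Rightarrow> 'a vec2" where "uminus_vec2 u = vabs (\<lambda>i. - vrep u i)"
definition minus_vec2 :: "'a vec2 \<Rightarrow> 'a vec2 \<Rightarrow> 'a vec2" where "minus_vec2 u v = vabs (\<lambda>i. vrep u i - vrep v i)"
definition scaleR_vec2 :: "real \<Rightarrow> 'a vec2 \<Rightarrow> 'a vec2" where "scaleR_vec2 r u = vabs (\<lambda>i. complex_of_real r * vrep u i)"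
definition norm_vec2 :: "'a vec2 \<Rightarrow> real" where "norm_vec2 u = l2norm (vrep u)"
definition inner_vec2 :: "'a vec2 \<Rightarrow> 'a vec2 \<Rightarrow> real" where "inner_vec2 u v = Re (cinner (vrep u) (vrep v))"
definition dist_vec2 :: "'a vec2 \<Rightarrow> 'a vec2 \<Rightarrow> real" where "dist_vec2 u v = norm (u - v)"
definition sgn_vec2 :: "'a vec2 \<Rightarrow> 'a vec2" where "sgn_vec2 u = inverse (norm u) *\<^sub>R u"
definition uniformity_vec2 :: "('a vec2 \<times> 'a vec2) filter" where
  "uniformity_vec2 = (INF e\<in>{0 <..}. principal {(x, y). dist x y < e})"
definition open_vec2 :: "'a vec2 set \<Rightarrow> bool" where
  "open_vec2 U = (\<forall>x\<in>U. \<forall>\<^sub>F (x', y) in uniformity. x' = x \<longrightarrow> y \<in> U)"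

lemma vrep_zero: "vrep (0::'a vec2) = (\<lambda>i. 0)" unfolding zero_vec2_def by (simp add: vrep_vabs)
lemma vrep_plus: "vrep (u + v) = (\<lambda>i. vrep u i + vrep v i)"
  unfolding plus_vec2_def by (simp add: vrep_vabs ell2_add vrep_ell2)
lemma vrep_uminus: "vrep (- u) = (\<lambda>i. - vrep u i)"
  unfolding uminus_vec2_def by (simp add: vrep_vabs ell2_uminus vrep_ell2)
lemma vrep_minus: "vrep (u - v) = (\<lambda>i. vrep u i - vrep v i)"
  unfolding minus_vec2_def by (simp add: vrep_vabs ell2_diff vrep_ell2)
lemma vrep_scaleR: "vrep (r *\<^sub>R u) = (\<lambda>i. complex_of_real r * vrep u i)"
  unfolding scaleR_vec2_def by (simp add: vrep_vabs ell2_scale vrep_ell2)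

instance
proof
  fix u v w :: "'a vec2" and r s :: real
  show "u + v + w = u + (v + w)" by (rule vrep_inject[THEN iffD1]) (simp add: vrep_plus add.assoc)
  show "u + v = v + u" by (rule vrep_inject[THEN iffD1]) (simp add: vrep_plus add.commute)
  show "0 + u = u" by (rule vrep_inject[THEN iffD1]) (simp add: vrep_plus vrep_zero)
  show "- u + u = 0" by (rule vrep_inject[THEN iffD1]) (simp add: vrep_plus vrep_zero vrep_uminus)
  show "u - v = u + - v" by (rule vrep_inject[THEN iffD1]) (simp add: vrep_plus vrep_minus vrep_uminus)
  show "r *\<^sub>R (u + v) = r *\<^sub>R u + r *\<^sub>R v" by (rule vrep_inject[THEN iffD1]) (simp add: vrep_plus vrep_scaleR distrib_left)
  show "(r + s) *\<^sub>R u = r *\<^sub>R u + s *\<^sub>R u" by (rule vrep_inject[THEN iffD1]) (simp add: vrep_plus vrep_scaleR distrib_right)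
  show "r *\<^sub>R s *\<^sub>R u = (r * s) *\<^sub>R u" by (rule vrep_inject[THEN iffD1]) (simp add: vrep_scaleR mult.assoc)
  show "1 *\<^sub>R u = u" by (rule vrep_inject[THEN iffD1]) (simp add: vrep_scaleR)
  show "dist u v = norm (u - v)" unfolding dist_vec2_def ..
  show "sgn u = inverse (norm u) *\<^sub>R u" unfolding sgn_vec2_def ..
  show "(uniformity :: ('a vec2 \<times> 'a vec2) filter) = (INF e\<in>{0 <..}. principal {(x, y). dist x y < e})"
    unfolding uniformity_vec2_def ..
  show "open U = (\<forall>x\<in>U. \<forall>\<^sub>F (x', y) in uniformity. x' = x \<longrightarrow> y \<in> U)" for U :: "'a vec2 set"
    unfolding open_vec2_def ..
  show "inner u v = inner v u" unfolding inner_vec2_def by (subst cinner_swap) simp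
  show "inner (u + v) w = inner u w + inner v w"
    unfolding inner_vec2_def vrep_plus by (simp add: cinner_add_left vrep_ell2)
  show "inner (r *\<^sub>R u) v = r * inner u v"
    unfolding inner_vec2_def vrep_scaleR by (simp add: cinner_scale_left vrep_ell2)
  show "0 \<le> inner u u" unfolding inner_vec2_def by (simp add: cinner_self vrep_ell2)
  show "(inner u u = 0) = (u = 0)"
  proof
    assume "inner u u = 0"
    hence "l2norm (vrep u) = 0" unfolding inner_vec2_def by (simp add: cinner_self vrep_ell2)
    hence "vrep u = (\<lambda>i. 0)" by (rule l2norm_eq_0[OF vrep_ell2])
    thus "u = 0" using vrep_zero vrep_inject by metis
  next
    assume "u = 0" thus "inner u u = 0" unfolding inner_vec2_def by (simp add: vrep_zero cinner_def)
  qed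
  show "norm u = sqrt (inner u u)" unfolding inner_vec2_def norm_vec2_def by (simp add: cinner_self vrep_ell2)
qed

end

lemma dist_vec2_l2: "dist u v = l2norm (\<lambda>i. vrep u i - vrep v i)"
  unfolding dist_vec2_def norm_vec2_def vrep_minus ..

instance vec2 :: (type) complete_space
proof
  fix X :: "nat \<Rightarrow> 'a vec2" assume C: "Cauchy X"
  have pc: "Cauchy (\<lambda>n. vrep (X n) i)" for i
  proof (rule metric_CauchyI)
    fix e :: real assume e: "0 < e"
    obtain M where M: "\<forall>m\<ge>M. \<forall>n\<ge>M. dist (X m) (X n) < e" using C e unfolding Cauchy_def by blast
    have "dist (vrep (X m) i) (vrep (X n) i) < e" if "m \<ge> M" "n \<ge> M" for m n
    proof -
      have "dist (vrep (X m) i) (vrep (X n) i) = cmod ((\<lambda>i. vrep (X m) i - vrep (X n) i) i)" by (simp add: dist_norm)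
      also have "\<dots> \<le> dist (X m) (X n)" unfolding dist_vec2_l2
        by (rule cmod_le_l2norm[OF ell2_diff[OF vrep_ell2 vrep_ell2]])
      also have "\<dots> < e" using M that by blast
      finally show ?thesis .
    qed
    thus "\<exists>M. \<forall>m\<ge>M. \<forall>n\<ge>M. dist (vrep (X m) i) (vrep (X n) i) < e" by blast
  qed
  define L where "L i = lim (\<lambda>n. vrep (X n) i)" for i
  have Llim: "(\<lambda>n. vrep (X n) i) \<longlonglongrightarrow> L i" for i
    unfolding L_def using pc[of i] by (simp add: Cauchy_convergent_iff convergent_LIMSEQ_iff)
  have main: "ell2 (\<lambda>i. vrep (X n) i - L i) \<and> l2norm (\<lambda>i. vrep (X n) i - L i) \<le> e"
    if e: "0 < e" and M: "\<forall>m\<ge>M. \<forall>n\<ge>M. dist (X m) (X n) < e" and n: "n \<ge> M" for e M n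
  proof -
    have b: "(\<Sum>i\<in>F. (cmod (vrep (X n) i - L i))^2) \<le> e^2" if F: "finite F" for F
    proof -
      have lim: "(\<lambda>m. \<Sum>i\<in>F. (cmod (vrep (X n) i - vrep (X m) i))^2) \<longlonglongrightarrow> (\<Sum>i\<in>F. (cmod (vrep (X n) i - L i))^2)"
        by (intro tendsto_intros Llim)
      have ev: "\<forall>\<^sub>F m in sequentially. (\<Sum>i\<in>F. (cmod (vrep (X n) i - vrep (X m) i))^2) \<le> e^2"
      proof (rule eventually_sequentiallyI[of M])
        fix m assume m: "M \<le> m"
        have d: "ell2 (\<lambda>i. vrep (X n) i - vrep (X m) i)" by (rule ell2_diff[OF vrep_ell2 vrep_ell2])
        have "(\<Sum>i\<in>F. (cmod (vrep (X n) i - vrep (X m) i))^2) \<le> (l2norm (\<lambda>i. vrep (X n) i - vrep (X m) i))^2"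
          by (rule ell2_sum_le[OF d F])
        also have "\<dots> = (dist (X n) (X m))^2" unfolding dist_vec2_l2 ..
        also have "\<dots> \<le> e^2"
        proof (rule power_mono)
          show "dist (X n) (X m) \<le> e" using M n m by (meson less_imp_le)
        qed simp
        finally show "(\<Sum>i\<in>F. (cmod (vrep (X n) i - vrep (X m) i))^2) \<le> e^2" .
      qed
      show ?thesis by (rule tendsto_le[OF _ tendsto_const lim ev]) simp
    qed
    show ?thesis using ell2_bound[OF b] e by auto
  qed
  obtain M0 where M0: "\<forall>m\<ge>M0. \<forall>n\<ge>M0. dist (X m) (X n) < 1" using C unfolding Cauchy_def
    by (meson zero_less_one)
  have Le: "ell2 L"
  proof -
    have "ell2 (\<lambda>i. vrep (X M0) i - (vrep (X M0) i - L i))"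
      using ell2_diff[OF vrep_ell2[of "X M0"] conjunct1[OF main[OF _ M0 order_refl]]] by simp
    thus ?thesis by simp
  qed
  have "X \<longlonglongrightarrow> vabs L"
  proof (rule metric_LIMSEQ_I)
    fix r :: real assume r: "0 < r"
    obtain M where M: "\<forall>m\<ge>M. \<forall>n\<ge>M. dist (X m) (X n) < r/2" using C r unfolding Cauchy_def
      by (meson half_gt_zero)
    have "dist (X n) (vabs L) < r" if n: "n \<ge> M" for n
    proof -
      have "dist (X n) (vabs L) = l2norm (\<lambda>i. vrep (X n) i - L i)" unfolding dist_vec2_l2 vrep_vabs[OF Le] ..
      also have "\<dots> \<le> r/2" using main[of "r/2" M n] r M n by simp
      finally show ?thesis using r by simp
    qed
    thus "\<exists>no. \<forall>n\<ge>no. dist (X n) (vabs L) < r" by blast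
  qed
  thus "convergent X" unfolding convergent_def by blast
qed


lemma quad_lower:
  fixes t c :: real assumes "0 \<le> t" "t \<le> 1" "0 < c"
  shows "(min 1 c / 2)^2 \<le> (1 - t)^2 + t^2 * c^2"
proof (cases "t \<le> 1/2")
  case True
  have "(min 1 c / 2)^2 \<le> (1/2)^2" by (rule power_mono) (use assms in auto)
  also have "\<dots> \<le> (1 - t)^2" by (rule power_mono) (use True in auto)
  finally show ?thesis by (simp add: add_increasing2)
next
  case False
  have "(min 1 c / 2)^2 \<le> (c/2)^2" by (rule power_mono) (use assms in auto)
  also have "\<dots> \<le> (t * c)^2" by (rule power_mono) (use False assms in \<open>auto intro: mult_right_mono\<close>)
  finally show ?thesis by (simp add: power_mult_distrib add_increasing)
qed

context
  fixes T :: "'v::{real_inner,complete_space} \<Rightarrow> 'v" and c :: real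
  assumes add: "\<And>u v. T (u + v) = T u + T v" and sc: "\<And>r v. T (r *\<^sub>R v) = r *\<^sub>R T v"
    and contr: "\<And>v. norm (T v) \<le> norm v" and c: "0 < c" and below: "\<And>v. c * norm v \<le> norm (v - T v)"
begin

lemma T_diff: "T (u - v) = T u - T v"
  using add[of u "(-1) *\<^sub>R v"] sc[of "-1" v] by simp

definition dd where "dd = min 1 c / 2"

lemma dd_pos: "0 < dd" unfolding dd_def using c by simp

lemma T_below:
  assumes t: "0 \<le> t" "t \<le> 1"
  shows "dd * norm v \<le> norm (v - t *\<^sub>R T v)"
proof -
  define u where "u = v - T v"
  have e: "v - t *\<^sub>R T v = (1 - t) *\<^sub>R v + t *\<^sub>R u" unfolding u_def by (simp add: algebra_simps)
  have iv: "0 \<le> inner v u"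
  proof -
    have "inner v (T v) \<le> norm v * norm (T v)" by (rule norm_cauchy_schwarz)
    also have "\<dots> \<le> norm v * norm v" by (rule mult_left_mono[OF contr]) simp
    finally show ?thesis unfolding u_def by (simp add: inner_diff_right power2_norm_eq_inner[symmetric] power2_eq_square)
  qed
  have "(norm (v - t *\<^sub>R T v))^2 = (1 - t)^2 * (norm v)^2 + 2 * ((1 - t) * t) * inner v u + t^2 * (norm u)^2"
    unfolding e power2_norm_eq_inner by (simp add: inner_add_left inner_add_right inner_commute power2_eq_square algebra_simps)
  also have "\<dots> \<ge> (1 - t)^2 * (norm v)^2 + t^2 * (norm u)^2"
    using iv t by (simp add: mult_nonneg_nonneg)
  finally have A: "(1 - t)^2 * (norm v)^2 + t^2 * (norm u)^2 \<le> (norm (v - t *\<^sub>R T v))^2" .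
  have "t^2 * (c * norm v)^2 \<le> t^2 * (norm u)^2"
    by (rule mult_left_mono) (use below[of v] c in \<open>auto simp: u_def intro!: power_mono\<close>)
  hence B: "((1 - t)^2 + t^2 * c^2) * (norm v)^2 \<le> (norm (v - t *\<^sub>R T v))^2"
    using A by (simp add: algebra_simps power_mult_distrib)
  have "(dd * norm v)^2 = dd^2 * (norm v)^2" by (simp add: power_mult_distrib)
  also have "\<dots> \<le> ((1 - t)^2 + t^2 * c^2) * (norm v)^2"
    by (rule mult_right_mono) (use quad_lower[OF t c] in \<open>auto simp: dd_def\<close>)
  finally have "(dd * norm v)^2 \<le> (norm (v - t *\<^sub>R T v))^2" using B by linarith
  thus ?thesis by (rule power2_le_imp_le) simp
qed

definition PP where "PP t \<longleftrightarrow> (\<forall>y. \<exists>x. x - t *\<^sub>R T x = y)"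

lemma PP_step:
  assumes t: "0 \<le> t" and s: "0 \<le> s" "s \<le> dd / 2" and ts: "t + s \<le> 1" and P: "PP t"
  shows "PP (t + s)"
  unfolding PP_def
proof
  fix y
  define S where "S z = (SOME x. x - t *\<^sub>R T x = z)" for z
  have Seq: "S z - t *\<^sub>R T (S z) = z" for z
    unfolding S_def using P unfolding PP_def by (meson someI_ex)
  have Slip: "dd * norm (S z - S z') \<le> norm (z - z')" for z z'
  proof -
    have "S z - S z' - t *\<^sub>R T (S z - S z') = (S z - t *\<^sub>R T (S z)) - (S z' - t *\<^sub>R T (S z'))"
      by (simp add: T_diff scaleR_diff_right)
    hence "S z - S z' - t *\<^sub>R T (S z - S z') = z - z'" using Seq[of z] Seq[of z'] by simp
    thus ?thesis using T_below[OF t, of "S z - S z'"] ts s by simp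
  qed
  define K where "K x = S (y + s *\<^sub>R T x)" for x
  have "\<exists>!x. K x = x"
  proof (rule banach_fix_type[of "1/2"])
    show "\<forall>x x'. dist (K x) (K x') \<le> 1/2 * dist x x'"
    proof (intro allI)
      fix x x'
      have "dd * dist (K x) (K x') \<le> norm ((y + s *\<^sub>R T x) - (y + s *\<^sub>R T x'))"
        unfolding K_def dist_norm by (rule Slip)
      also have "\<dots> = s * norm (T (x - x'))" by (simp add: T_diff scaleR_diff_right[symmetric] s)
      also have "\<dots> \<le> s * norm (x - x')" by (rule mult_left_mono[OF contr s(1)])
      also have "\<dots> \<le> (dd / 2) * norm (x - x')" by (rule mult_right_mono[OF s(2)]) simp
      finally have "dd * dist (K x) (K x') \<le> dd * (1/2 * dist x x')" by (simp add: dist_norm)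
      thus "dist (K x) (K x') \<le> 1/2 * dist x x'" using dd_pos by simp
    qed
  qed auto
  then obtain x where x: "K x = x" by blast
  have "x - t *\<^sub>R T x = y + s *\<^sub>R T x" using Seq[of "y + s *\<^sub>R T x"] x unfolding K_def by simp
  hence "x - (t + s) *\<^sub>R T x = y" by (simp add: algebra_simps)
  thus "\<exists>x. x - (t + s) *\<^sub>R T x = y" by blast
qed

lemma PP_min: "PP (min 1 (real k * (dd / 2)))"
proof (induction k)
  case 0
  show ?case unfolding PP_def by simp
next
  case (Suc k)
  show ?case
  proof (cases "real k * (dd / 2) \<ge> 1")
    case True
    hence "min 1 (real (Suc k) * (dd / 2)) = min 1 (real k * (dd / 2))"
      using dd_pos by (simp add: distrib_right)
    thus ?thesis using Suc by simp
  next
    case False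
    define t where "t = real k * (dd / 2)"
    define s where "s = min 1 (real (Suc k) * (dd / 2)) - t"
    have t0: "0 \<le> t" unfolding t_def using dd_pos by simp
    have mt: "min 1 (real k * (dd / 2)) = t" using False unfolding t_def by simp
    have s0: "0 \<le> s" unfolding s_def t_def using False dd_pos by (simp add: distrib_right)
    have m: "min 1 (real (Suc k) * (dd / 2)) \<le> real (Suc k) * (dd / 2)" by (rule min.cobounded2)
    have s1: "s \<le> dd / 2" using m unfolding s_def t_def by (simp add: distrib_right)
    have ts: "t + s \<le> 1" unfolding s_def by simp
    have "PP (t + s)" by (rule PP_step[OF t0 s0 s1 ts]) (use Suc mt in simp)
    thus ?thesis unfolding s_def by simp
  qed
qed

lemma abstract_surj: "\<exists>x. x - T x = y"
proof -
  obtain k :: nat where k: "2 / dd < real k" using reals_Archimedean2 by blast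
  hence "1 \<le> real k * (dd / 2)" using dd_pos by (simp add: field_simps)
  hence "PP 1" using PP_min[of k] by simp
  thus ?thesis unfolding PP_def by (metis scaleR_one)
qed

end


lemma ell2_prod_pair: "ell2 p \<Longrightarrow> ell2 q \<Longrightarrow> ell2 (\<lambda>z. p (fst z) * q (snd z))"
proof -
  assume p: "ell2 p" and q: "ell2 q"
  define g where "g z = (cmod (p (fst z) * q (snd z)))^2" for z :: "'a \<times> 'b"
  have h: "((\<lambda>m. g (l, m)) has_sum (cmod (p l))^2 * (l2norm q)^2) UNIV" for l
  proof -
    have "((\<lambda>m. (cmod (q m))^2) has_sum (l2norm q)^2) UNIV"
      using q unfolding ell2_def l2norm_sq by (simp add: has_sum_infsum)
    from has_sum_cmult_right[OF this, of "(cmod (p l))^2"]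
    show ?thesis unfolding g_def by (simp add: norm_mult power_mult_distrib)
  qed
  have "g summable_on UNIV"
  proof (rule fubini_nn2[OF _ h])
    show "(\<lambda>l. (cmod (p l))^2 * (l2norm q)^2) summable_on UNIV"
      using p unfolding ell2_def by (rule summable_on_cmult_left)
  qed (simp add: g_def)
  thus ?thesis unfolding ell2_def g_def .
qed

lemma mat_mult_lin_left:
  assumes A: "bounded_mat A" and x: "ell2 (unc x)" and y: "ell2 (unc y)"
  shows "mat_mult (\<lambda>i k. p * x i k + q * y i k) A i k = p * mat_mult x A i k + q * mat_mult y A i k"
proof -
  have sx: "(\<lambda>l. x i l * A l k) summable_on UNIV"
    by (rule prod_summable[OF hs_rows(1)[OF x, of i] col_ell2[OF A, of k]]) (simp add: norm_mult)
  have sy: "(\<lambda>l. y i l * A l k) summable_on UNIV"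
    by (rule prod_summable[OF hs_rows(1)[OF y, of i] col_ell2[OF A, of k]]) (simp add: norm_mult)
  have "mat_mult (\<lambda>i k. p * x i k + q * y i k) A i k = (\<Sum>\<^sub>\<infinity>l. p * (x i l * A l k) + q * (y i l * A l k))"
    unfolding mat_mult_def by (simp add: algebra_simps)
  also have "\<dots> = (\<Sum>\<^sub>\<infinity>l. p * (x i l * A l k)) + (\<Sum>\<^sub>\<infinity>l. q * (y i l * A l k))"
    by (rule infsum_add) (intro summable_on_cmult_right sx sy)+
  also have "\<dots> = p * mat_mult x A i k + q * mat_mult y A i k"
    unfolding mat_mult_def by (simp add: infsum_cmult_right')
  finally show ?thesis .
qed

lemma sandwich_adj:
  assumes A: "bounded_mat A" and x: "ell2 (unc x)"
  shows "mat_mult (adj A) (mat_mult (adj x) A) i k = cnj (mat_mult (adj A) (mat_mult x A) k i)"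
proof -
  define f where "f l m = cnj (A l i) * cnj (x m l) * A m k" for l m
  have u: "ell2 (\<lambda>z. cnj (A (fst z) i) * A (snd z) k)"
    by (rule ell2_prod_pair[OF ell2_cnj[OF col_ell2[OF A]] col_ell2[OF A]])
  have v: "ell2 (unc (cnjm (tp x)))" using x by (simp add: ell2_unc_cnjm ell2_unc_tp)
  have fs: "(\<lambda>(l, m). f l m) summable_on UNIV \<times> UNIV"
  proof -
    have "(\<lambda>z. f (fst z) (snd z)) summable_on UNIV"
      by (rule prod_summable[OF u v]) (simp add: f_def unc_def cnjm_def tp_def norm_mult)
    thus ?thesis by (simp add: case_prod_unfold)
  qed
  have L: "mat_mult (adj A) (mat_mult (adj x) A) i k = (\<Sum>\<^sub>\<infinity>l. \<Sum>\<^sub>\<infinity>m. f l m)"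
    unfolding mat_mult_def adj_def f_def by (simp add: infsum_cmult_right'[symmetric] mult.assoc)
  have R: "cnj (mat_mult (adj A) (mat_mult x A) k i) = (\<Sum>\<^sub>\<infinity>m. \<Sum>\<^sub>\<infinity>l. f l m)"
    unfolding mat_mult_def adj_def f_def
    by (simp add: infsum_cnj[symmetric] infsum_cmult_right'[symmetric] mult_ac)
  show ?thesis unfolding L R by (rule infsum_swap_banach[OF fs])
qed

context
  fixes a :: "nat \<Rightarrow> 'i \<Rightarrow> 'i \<Rightarrow> complex"
  assumes bdd: "\<And>j. bounded_mat (a j)" and S1: "sot_sum_id (\<lambda>j. mat_mult (adj (a j)) (a j))"
    and S2: "sot_sum_id (\<lambda>j. mat_mult (a j) (adj (a j)))"
begin

lemma Psi_summable: "ell2 (unc x) \<Longrightarrow> summable (\<lambda>j. mat_mult (adj (a j)) (mat_mult x (a j)) i k)"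
  by (rule summable_on_imp_summable) (rule MA_summable[OF bdd S1 family_right(1)[OF bdd S2] family_right(2)[OF bdd S2]])

lemma Psi_lin:
  assumes x: "ell2 (unc x)" and y: "ell2 (unc y)"
  shows "Psi a (\<lambda>i k. p * x i k + q * y i k) = (\<lambda>i k. p * Psi a x i k + q * Psi a y i k)"
proof (intro ext)
  fix i k
  have e: "mat_mult (adj (a j)) (mat_mult (\<lambda>i k. p * x i k + q * y i k) (a j)) i k
     = p * mat_mult (adj (a j)) (mat_mult x (a j)) i k + q * mat_mult (adj (a j)) (mat_mult y (a j)) i k" for j
  proof -
    have m: "mat_mult (\<lambda>i k. p * x i k + q * y i k) (a j) = (\<lambda>i k. p * mat_mult x (a j) i k + q * mat_mult y (a j) i k)"
      by (intro ext) (rule mat_mult_lin_left[OF bdd x y])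
    have cx: "ell2 (\<lambda>l. mat_mult x (a j) l k)" by (rule hs_cols(1)[OF family_right(1)[OF bdd S2 x]])
    have cy: "ell2 (\<lambda>l. mat_mult y (a j) l k)" by (rule hs_cols(1)[OF family_right(1)[OF bdd S2 y]])
    have ci: "ell2 (\<lambda>l. a j l i)" by (rule col_ell2[OF bdd])
    show ?thesis unfolding m adj_mult_entry
      using cinner_add_right[OF ci ell2_scale[OF cx, of p] ell2_scale[OF cy, of q]]
        cinner_scale_right[OF ci cx, of p] cinner_scale_right[OF ci cy, of q] by simp
  qed
  show "Psi a (\<lambda>i k. p * x i k + q * y i k) i k = p * Psi a x i k + q * Psi a y i k"
    unfolding Psi_def e
    using suminf_add[OF summable_mult[OF Psi_summable[OF x], of p] summable_mult[OF Psi_summable[OF y], of q]]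
      suminf_mult[OF Psi_summable[OF x], of p] suminf_mult[OF Psi_summable[OF y], of q]
    by simp
qed


lemma adj_HS: "ell2 (unc x) \<Longrightarrow> ell2 (unc (adj x))"
proof -
  assume x: "ell2 (unc x)"
  have "adj x = cnjm (tp x)" unfolding adj_def cnjm_def tp_def ..
  thus ?thesis using x by (simp add: ell2_unc_cnjm ell2_unc_tp)
qed

lemma hs_norm_adj: "hs_norm (adj x) = hs_norm x"
proof -
  have "adj x = cnjm (tp x)" unfolding adj_def cnjm_def tp_def ..
  thus ?thesis by (simp add: hs_norm_cnjm hs_norm_tp)
qed

lemma Psi_adj:
  assumes x: "ell2 (unc x)"
  shows "Psi a (adj x) = adj (Psi a x)"
proof (intro ext)
  fix i k
  define T where "T j = mat_mult (adj (a j)) (mat_mult x (a j)) k i" for j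
  have sm: "(\<lambda>j. cnj (T j)) sums cnj (suminf T)"
    unfolding T_def by (rule sums_cnj[THEN iffD2, OF summable_sums[OF Psi_summable[OF x, of k i]]])
  have "Psi a (adj x) i k = (\<Sum>j. cnj (T j))"
    unfolding Psi_def T_def by (rule arg_cong[where f=suminf], rule ext, rule sandwich_adj[OF bdd x])
  also have "\<dots> = cnj (suminf T)" using sm by (rule sums_unique[symmetric])
  also have "\<dots> = adj (Psi a x) i k" unfolding adj_def Psi_def T_def ..
  finally show "Psi a (adj x) i k = adj (Psi a x) i k" .
qed
end


lemma ell2_unc_combo: "ell2 (unc x) \<Longrightarrow> ell2 (unc y) \<Longrightarrow> ell2 (unc (\<lambda>i k. p * x i k + q * y i k))"
proof -
  assume x: "ell2 (unc x)" and y: "ell2 (unc y)"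
  have "unc (\<lambda>i k. p * x i k + q * y i k) = (\<lambda>z. p * unc x z + q * unc y z)" unfolding unc_def ..
  thus ?thesis using ell2_add[OF ell2_scale[OF x] ell2_scale[OF y]] by simp
qed

lemma hs_norm_combo:
  assumes x: "ell2 (unc x)" and y: "ell2 (unc y)"
  shows "hs_norm (\<lambda>i k. p * x i k + q * y i k) \<le> cmod p * hs_norm x + cmod q * hs_norm y"
proof -
  have "unc (\<lambda>i k. p * x i k + q * y i k) = (\<lambda>z. p * unc x z + q * unc y z)" unfolding unc_def ..
  hence "hs_norm (\<lambda>i k. p * x i k + q * y i k) = l2norm (\<lambda>z. p * unc x z + q * unc y z)" unfolding hs_norm_eq by simp
  also have "\<dots> \<le> l2norm (\<lambda>z. p * unc x z) + l2norm (\<lambda>z. q * unc y z)"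
    by (rule l2norm_triangle[OF ell2_scale[OF x] ell2_scale[OF y]])
  also have "\<dots> = cmod p * hs_norm x + cmod q * hs_norm y"
    unfolding hs_norm_eq by (simp add: l2norm_scale x y)
  finally show ?thesis .
qed

lemma hs_norm_scale: "ell2 (unc x) \<Longrightarrow> hs_norm (\<lambda>i k. p * x i k) = cmod p * hs_norm x"
proof -
  assume x: "ell2 (unc x)"
  have "unc (\<lambda>i k. p * x i k) = (\<lambda>z. p * unc x z)" unfolding unc_def ..
  thus ?thesis unfolding hs_norm_eq by (simp add: l2norm_scale x)
qed

context
  fixes a :: "nat \<Rightarrow> 'i \<Rightarrow> 'i \<Rightarrow> complex"
  assumes bdd: "\<And>j. bounded_mat (a j)" and S1: "sot_sum_id (\<lambda>j. mat_mult (adj (a j)) (a j))"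
    and S2: "sot_sum_id (\<lambda>j. mat_mult (a j) (adj (a j)))"
begin

definition FF :: "('i \<Rightarrow> 'i \<Rightarrow> complex) \<Rightarrow> 'i \<Rightarrow> 'i \<Rightarrow> complex" where
  "FF x = (\<lambda>i k. Psi a x i k - x i k)"

lemma FF_HS: "ell2 (unc x) \<Longrightarrow> ell2 (unc (FF x))"
  unfolding FF_def unc_diff by (rule ell2_diff[OF Psi_ell2[OF bdd S1 S2]])

lemma FF_lin:
  assumes x: "ell2 (unc x)" and y: "ell2 (unc y)"
  shows "FF (\<lambda>i k. p * x i k + q * y i k) = (\<lambda>i k. p * FF x i k + q * FF y i k)"
  unfolding FF_def Psi_lin[OF bdd S1 S2 x y] by (auto intro!: ext simp: algebra_simps)

lemma FF_adj: "ell2 (unc x) \<Longrightarrow> FF (adj x) = adj (FF x)"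
  unfolding FF_def Psi_adj[OF bdd S1 S2] by (auto intro!: ext simp: adj_def)

lemma sa_combo:
  fixes p :: complex
  assumes z: "ell2 (unc z)"
  defines "y \<equiv> (\<lambda>i k. p * z i k + cnj p * adj z i k)"
  shows "ell2 (unc y)" "adj y = y" "hs_norm (FF y) \<le> 2 * cmod p * hs_norm (FF z)"
proof -
  have az: "ell2 (unc (adj z))" by (rule adj_HS[OF bdd S1 S2 z])
  show "ell2 (unc y)" unfolding y_def by (rule ell2_unc_combo[OF z az])
  show "adj y = y" unfolding y_def adj_def by (auto intro!: ext simp: add.commute)
  have "FF y = (\<lambda>i k. p * FF z i k + cnj p * FF (adj z) i k)" unfolding y_def by (rule FF_lin[OF z az])
  also have "FF (adj z) = adj (FF z)" by (rule FF_adj[OF z])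
  finally have "hs_norm (FF y) \<le> cmod p * hs_norm (FF z) + cmod (cnj p) * hs_norm (adj (FF z))"
    using hs_norm_combo[OF FF_HS[OF z] adj_HS[OF bdd S1 S2 FF_HS[OF z]], of p "cnj p"] by simp
  thus "hs_norm (FF y) \<le> 2 * cmod p * hs_norm (FF z)" by (simp add: hs_norm_adj[OF bdd S1 S2])
qed

lemma sa_lemma:
  assumes x: "ell2 (unc x)" and e: "0 < e" and lt: "hs_norm (FF x) < e * hs_norm x"
  shows "\<exists>y. ell2 (unc y) \<and> adj y = y \<and> hs_norm y = 1 \<and> hs_norm (FF y) \<le> 2 * e"
proof -
  define N where "N = hs_norm x"
  have "0 \<le> hs_norm (FF x)" by (simp add: hs_norm_eq)
  hence "0 < e * N" using lt unfolding N_def by linarith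
  hence N: "0 < N" using e by (simp add: zero_less_mult_iff)
  define x' where "x' = (\<lambda>i k. complex_of_real (1/N) * x i k)"
  have x': "ell2 (unc x')" using ell2_unc_combo[OF x x, of "complex_of_real (1/N)" 0] unfolding x'_def by simp
  have nx': "hs_norm x' = 1" unfolding x'_def hs_norm_scale[OF x] using N by (simp add: N_def norm_divide)
  have Fx': "FF x' = (\<lambda>i k. complex_of_real (1/N) * FF x i k)"
    using FF_lin[OF x x, of "complex_of_real (1/N)" 0] unfolding x'_def by simp
  have nFx': "hs_norm (FF x') < e"
  proof -
    have "hs_norm (FF x') = hs_norm (FF x) / N" unfolding Fx' hs_norm_scale[OF FF_HS[OF x]] using N by (simp add: norm_divide)
    also have "\<dots> < e" using lt N unfolding N_def by (simp add: divide_less_eq)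
    finally show ?thesis .
  qed
  define h where "h = (\<lambda>i k. (1/2::complex) * x' i k + cnj (1/2) * adj x' i k)"
  define g where "g = (\<lambda>i k. (-\<i>/2) * x' i k + cnj (-\<i>/2) * adj x' i k)"
  note H = sa_combo[OF x', of "1/2", folded h_def]
  note G = sa_combo[OF x', of "-\<i>/2", folded g_def]
  have Fh: "hs_norm (FF h) < e" using H(3) nFx' by simp
  have Fg: "hs_norm (FF g) < e" using G(3) nFx' by (simp add: norm_divide)
  have "x' = (\<lambda>i k. 1 * h i k + \<i> * g i k)" unfolding h_def g_def by (auto intro!: ext simp: algebra_simps)
  hence "1 \<le> hs_norm h + hs_norm g"
    using hs_norm_combo[OF H(1) G(1), of 1 \<i>] nx' by simp
  hence "1/2 \<le> hs_norm h \<or> 1/2 \<le> hs_norm g" by linarith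
  then obtain s where s: "ell2 (unc s)" "adj s = s" "1/2 \<le> hs_norm s" "hs_norm (FF s) < e"
    using H G Fh Fg by blast
  define r where "r = hs_norm s"
  have r: "0 < r" using s(3) unfolding r_def by simp
  define y where "y = (\<lambda>i k. complex_of_real (1/r) * s i k)"
  have y: "ell2 (unc y)" using ell2_unc_combo[OF s(1) s(1), of "complex_of_real (1/r)" 0] unfolding y_def by simp
  have sa: "cnj (s k i) = s i k" for i k using fun_cong[OF fun_cong[OF s(2)], of i k] unfolding adj_def .
  have ay: "adj y = y" unfolding y_def adj_def by (auto intro!: ext simp: sa)
  have ny: "hs_norm y = 1" unfolding y_def hs_norm_scale[OF s(1)] using r by (simp add: r_def norm_divide)
  have Fy: "FF y = (\<lambda>i k. complex_of_real (1/r) * FF s i k)"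
    using FF_lin[OF s(1) s(1), of "complex_of_real (1/r)" 0] unfolding y_def by simp
  have "hs_norm (FF y) = hs_norm (FF s) / r" unfolding Fy hs_norm_scale[OF FF_HS[OF s(1)]] using r by (simp add: norm_divide)
  also have "\<dots> \<le> e / (1/2)"
    by (rule frac_le) (use s r e in \<open>auto simp: r_def hs_norm_eq\<close>)
  finally show ?thesis using y ay ny by auto
qed


lemma not_below:
  assumes nb: "\<not> (\<exists>c>0. \<forall>x. ell2 (unc x) \<longrightarrow> c * hs_norm x \<le> hs_norm (FF x))"
  shows "\<exists>xs. (\<forall>n. is_HS (xs n) \<and> adj (xs n) = xs n \<and> hs_norm (xs n) = 1) \<and>
           (\<lambda>n. hs_norm (FF (xs n))) \<longlonglongrightarrow> 0"
proof -
  have "\<exists>y. ell2 (unc y) \<and> adj y = y \<and> hs_norm y = 1 \<and> hs_norm (FF y) \<le> 2 * (1 / real (Suc n))" for n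
  proof -
    have e: "0 < 1 / real (Suc n)" by simp
    obtain x where x: "ell2 (unc x)" "\<not> (1 / real (Suc n)) * hs_norm x \<le> hs_norm (FF x)"
      using nb e by blast
    show ?thesis by (rule sa_lemma[OF x(1) e]) (use x(2) in linarith)
  qed
  then obtain xs where xs: "\<And>n. ell2 (unc (xs n)) \<and> adj (xs n) = xs n \<and> hs_norm (xs n) = 1 \<and> hs_norm (FF (xs n)) \<le> 2 * (1 / real (Suc n))"
    by metis
  have "(\<lambda>n. hs_norm (FF (xs n))) \<longlonglongrightarrow> 0"
  proof (rule tendsto_sandwich[of "\<lambda>n. 0" _ _ "\<lambda>n. 2 * (1 / real (Suc n))"])
    show "\<forall>\<^sub>F n in sequentially. 0 \<le> hs_norm (FF (xs n))" by (simp add: hs_norm_eq)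
    show "\<forall>\<^sub>F n in sequentially. hs_norm (FF (xs n)) \<le> 2 * (1 / real (Suc n))" using xs by simp
    show "(\<lambda>n. 2 * (1 / real (Suc n))) \<longlonglongrightarrow> 0"
      using tendsto_mult_right_zero[OF LIMSEQ_inverse_real_of_nat, of 2] by (simp add: inverse_eq_divide)
  qed simp
  thus ?thesis using xs is_HS_iff by blast
qed

definition fromV :: "('i \<times> 'i) vec2 \<Rightarrow> 'i \<Rightarrow> 'i \<Rightarrow> complex" where "fromV v = (\<lambda>i k. vrep v (i, k))"

lemma unc_fromV: "unc (fromV v) = vrep v" unfolding unc_def fromV_def by simp

lemma fromV_HS: "ell2 (unc (fromV v))" unfolding unc_fromV by (rule vrep_ell2)

definition TT :: "('i \<times> 'i) vec2 \<Rightarrow> ('i \<times> 'i) vec2" where "TT v = vabs (unc (Psi a (fromV v)))"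

lemma vrep_TT: "vrep (TT v) = unc (Psi a (fromV v))"
  unfolding TT_def by (rule vrep_vabs[OF Psi_ell2[OF bdd S1 S2 fromV_HS]])

lemma fromV_combo: "fromV (u + v) = (\<lambda>i k. 1 * fromV u i k + 1 * fromV v i k)"
  "fromV (r *\<^sub>R v) = (\<lambda>i k. complex_of_real r * fromV v i k + 0 * fromV v i k)"
  unfolding fromV_def by (simp_all add: vrep_plus vrep_scaleR)

lemma TT_add: "TT (u + v) = TT u + TT v"
proof (rule vrep_inject[THEN iffD1])
  show "vrep (TT (u + v)) = vrep (TT u + TT v)"
    unfolding vrep_TT vrep_plus fromV_combo Psi_lin[OF bdd S1 S2 fromV_HS fromV_HS] by (simp add: unc_def)
qed

lemma TT_scale: "TT (r *\<^sub>R v) = r *\<^sub>R TT v"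
proof (rule vrep_inject[THEN iffD1])
  show "vrep (TT (r *\<^sub>R v)) = vrep (r *\<^sub>R TT v)"
    unfolding vrep_TT vrep_scaleR fromV_combo Psi_lin[OF bdd S1 S2 fromV_HS fromV_HS] by (simp add: unc_def)
qed

lemma TT_contr: "norm (TT v) \<le> norm v"
  unfolding norm_vec2_def vrep_TT
  using Psi_norm[OF bdd S1 S2 fromV_HS, of v] unfolding hs_norm_eq unc_fromV .

lemma TT_minus: "norm (v - TT v) = hs_norm (FF (fromV v))"
proof -
  have "vrep (v - TT v) = (\<lambda>p. - unc (FF (fromV v)) p)"
    unfolding vrep_minus vrep_TT FF_def unc_diff unc_fromV by simp
  thus ?thesis unfolding norm_vec2_def hs_norm_eq by (simp add: l2norm_uminus)
qed

lemma FF_inj: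
  assumes c: "0 < c" and below: "\<And>x. ell2 (unc x) \<Longrightarrow> c * hs_norm x \<le> hs_norm (FF x)"
    and x1: "ell2 (unc x1)" and x2: "ell2 (unc x2)" and eq: "FF x1 = FF x2"
  shows "x1 = x2"
proof -
  define d where "d = (\<lambda>i k. 1 * x1 i k + (-1) * x2 i k)"
  have d: "ell2 (unc d)" unfolding d_def by (rule ell2_unc_combo[OF x1 x2])
  have "FF d = (\<lambda>i k. 1 * FF x1 i k + (-1) * FF x2 i k)" unfolding d_def by (rule FF_lin[OF x1 x2])
  hence "FF d = (\<lambda>i k. 0)" using eq by simp
  hence "hs_norm (FF d) = 0" unfolding hs_norm_eq unc_def by simp
  hence "c * hs_norm d \<le> 0" using below[OF d] by simp
  hence "hs_norm d \<le> 0" using c by (simp add: hs_norm_eq mult_le_0_iff)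
  hence "hs_norm d = 0" using l2norm_nonneg[of "unc d"] unfolding hs_norm_eq by linarith
  hence "unc d = (\<lambda>p. 0)" unfolding hs_norm_eq by (rule l2norm_eq_0[OF d])
  hence "unc d (i, k) = 0" for i k by simp
  hence "x1 i k = x2 i k" for i k unfolding d_def unc_def by simp
  thus ?thesis by (auto intro!: ext)
qed

lemma below_invertible:
  assumes c: "0 < c" and below: "\<And>x. ell2 (unc x) \<Longrightarrow> c * hs_norm x \<le> hs_norm (FF x)"
  shows "HS_invertible FF"
proof -
  have surj: "\<exists>x. ell2 (unc x) \<and> FF x = y" if y: "ell2 (unc y)" for y
  proof -
    have bel: "c * norm v \<le> norm (v - TT v)" for v
    proof -
      have "c * hs_norm (fromV v) \<le> hs_norm (FF (fromV v))" by (rule below[OF fromV_HS])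
      moreover have "hs_norm (fromV v) = norm v" unfolding hs_norm_eq unc_fromV norm_vec2_def ..
      ultimately show ?thesis unfolding TT_minus by simp
    qed
    obtain v where v: "v - TT v = vabs (\<lambda>p. - unc y p)"
      using abstract_surj[OF TT_add TT_scale TT_contr c bel] by blast
    have "vrep (v - TT v) = (\<lambda>p. - unc y p)" unfolding v by (rule vrep_vabs[OF ell2_uminus[OF y]])
    hence ee: "(\<lambda>p. vrep v p - unc (Psi a (fromV v)) p) = (\<lambda>p. - unc y p)" unfolding vrep_minus vrep_TT .
    have e: "vrep v p - unc (Psi a (fromV v)) p = - unc y p" for p using fun_cong[OF ee, of p] by simp
    have "FF (fromV v) i k = y i k" for i k
    proof -
      have "FF (fromV v) i k = - (vrep v (i,k) - unc (Psi a (fromV v)) (i,k))"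
        unfolding FF_def fromV_def unc_def by simp
      also have "\<dots> = y i k" using e[of "(i,k)"] unfolding unc_def by simp
      finally show ?thesis .
    qed
    hence "FF (fromV v) = y" by (auto intro!: ext)
    thus ?thesis using fromV_HS by blast
  qed
  define G where "G y = (SOME x. ell2 (unc x) \<and> FF x = y)" for y
  have G: "ell2 (unc (G y)) \<and> FF (G y) = y" if "ell2 (unc y)" for y
    unfolding G_def using surj[OF that] by (rule someI_ex)
  have f1: "\<forall>y. is_HS y \<longrightarrow> is_HS (G y)" using G is_HS_iff by blast
  have f2: "\<forall>x. is_HS x \<longrightarrow> G (FF x) = x"
  proof (intro allI impI)
    fix x :: "'i \<Rightarrow> 'i \<Rightarrow> complex" assume x: "is_HS x"
    hence x': "ell2 (unc x)" by (simp add: is_HS_iff)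
    have "ell2 (unc (G (FF x))) \<and> FF (G (FF x)) = FF x" by (rule G[OF FF_HS[OF x']])
    thus "G (FF x) = x" using FF_inj[OF c below _ x'] by blast
  qed
  have f3: "\<forall>y. is_HS y \<longrightarrow> FF (G y) = y" using G is_HS_iff by blast
  have f4: "\<forall>y. is_HS y \<longrightarrow> hs_norm (G y) \<le> (1/c) * hs_norm y"
  proof (intro allI impI)
    fix y :: "'i \<Rightarrow> 'i \<Rightarrow> complex" assume "is_HS y"
    hence Gy: "ell2 (unc (G y)) \<and> FF (G y) = y" using G is_HS_iff by blast
    have "c * hs_norm (G y) \<le> hs_norm y" using below[of "G y"] Gy by simp
    thus "hs_norm (G y) \<le> (1/c) * hs_norm y" using c by (simp add: field_simps)
  qed
  show ?thesis unfolding HS_invertible_def using f1 f2 f3 f4 by blast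
qed

lemma part3:
  "(\<not> HS_invertible (\<lambda>x i k. Psi a x i k - x i k)) \<longleftrightarrow>
     (\<exists>xs :: nat \<Rightarrow> 'i \<Rightarrow> 'i \<Rightarrow> complex.
        (\<forall>n. is_HS (xs n) \<and> adj (xs n) = xs n \<and> hs_norm (xs n) = 1) \<and>
        (\<lambda>n. hs_norm (\<lambda>i k. Psi a (xs n) i k - xs n i k)) \<longlonglongrightarrow> 0)"
proof -
  have FFe: "(\<lambda>x i k. Psi a x i k - x i k) = FF" unfolding FF_def[abs_def] ..
  show ?thesis unfolding FFe FF_def[symmetric]
  proof
    assume ni: "\<not> HS_invertible FF"
    show "\<exists>xs. (\<forall>n. is_HS (xs n) \<and> adj (xs n) = xs n \<and> hs_norm (xs n) = 1) \<and> (\<lambda>n. hs_norm (FF (xs n))) \<longlonglongrightarrow> 0"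
    proof (rule not_below)
      show "\<not> (\<exists>c>0. \<forall>x. ell2 (unc x) \<longrightarrow> c * hs_norm x \<le> hs_norm (FF x))"
      proof
        assume "\<exists>c>0. \<forall>x. ell2 (unc x) \<longrightarrow> c * hs_norm x \<le> hs_norm (FF x)"
        then obtain c where c: "0 < c" and b: "\<And>x. ell2 (unc x) \<Longrightarrow> c * hs_norm x \<le> hs_norm (FF x)" by blast
        have "HS_invertible FF" by (rule below_invertible[OF c b])
        with ni show False by contradiction
      qed
    qed
  next
    assume "\<exists>xs. (\<forall>n. is_HS (xs n) \<and> adj (xs n) = xs n \<and> hs_norm (xs n) = 1) \<and> (\<lambda>n. hs_norm (FF (xs n))) \<longlonglongrightarrow> 0"
    then obtain xs where xs: "\<And>n. is_HS (xs n) \<and> adj (xs n) = xs n \<and> hs_norm (xs n) = 1"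
      and lim: "(\<lambda>n. hs_norm (FF (xs n))) \<longlonglongrightarrow> 0" by blast
    show "\<not> HS_invertible FF"
    proof
      assume "HS_invertible FF"
      then obtain G C where G1: "\<And>x. is_HS x \<Longrightarrow> G (FF x) = x"
        and GC: "\<And>y. is_HS y \<Longrightarrow> hs_norm (G y) \<le> C * hs_norm y"
        unfolding HS_invertible_def by blast
      have one: "1 \<le> C * hs_norm (FF (xs n))" for n
      proof -
        have h: "is_HS (FF (xs n))" using FF_HS xs is_HS_iff by blast
        have "1 = hs_norm (G (FF (xs n)))" using G1 xs by simp
        also have "\<dots> \<le> C * hs_norm (FF (xs n))" by (rule GC[OF h])
        finally show ?thesis .
      qed
      have "(\<lambda>n. C * hs_norm (FF (xs n))) \<longlonglongrightarrow> 0" using tendsto_mult_right_zero[OF lim] by simp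
      hence "\<forall>\<^sub>F n in sequentially. C * hs_norm (FF (xs n)) < 1"
        by (rule order_tendstoD) simp
      then obtain N where "\<And>n. N \<le> n \<Longrightarrow> C * hs_norm (FF (xs n)) < 1" unfolding eventually_sequentially by blast
      hence "C * hs_norm (FF (xs N)) < 1" by simp
      thus False using one[of N] by simp
    qed
  qed
qed

end


theorem proposition2p1:
  fixes a :: "nat \<Rightarrow> 'i::countable \<Rightarrow> 'i \<Rightarrow> complex"
  assumes bdd: "\<And>j. bounded_mat (a j)"
    and sum1: "sot_sum_id (\<lambda>j. mat_mult (adj (a j)) (a j))"
    and sum2: "sot_sum_id (\<lambda>j. mat_mult (a j) (adj (a j)))"
  shows
    "(\<forall>x. is_HS x \<longrightarrow> is_HS (Psi a x) \<and> hs_norm (Psi a x) \<le> hs_norm x)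
     \<and> (\<forall>x. is_HS x \<longrightarrow>
          hs2 (commut a x) < \<infinity>
        \<and> hs_norm (commut a x) ^ 2 \<le> 2 * hs_norm (\<lambda>i k. x i k - Psi a x i k) * hs_norm x
        \<and> hs_norm (\<lambda>i k. Psi a x i k - x i k) \<le> hs_norm (commut a x))
     \<and> ((\<not> HS_invertible (\<lambda>x i k. Psi a x i k - x i k)) \<longleftrightarrow>
        (\<exists>xs :: nat \<Rightarrow> 'i \<Rightarrow> 'i \<Rightarrow> complex.
           (\<forall>n. is_HS (xs n) \<and> adj (xs n) = xs n \<and> hs_norm (xs n) = 1) \<and>
           (\<lambda>n. hs_norm (\<lambda>i k. Psi a (xs n) i k - xs n i k)) \<longlonglongrightarrow> 0))"
proof -
  have P1: "\<forall>x. is_HS x \<longrightarrow> is_HS (Psi a x) \<and> hs_norm (Psi a x) \<le> hs_norm x"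
    using Psi_ell2[OF bdd sum1 sum2] Psi_norm[OF bdd sum1 sum2] by (simp add: is_HS_iff)
  have P2: "\<forall>x. is_HS x \<longrightarrow>
          hs2 (commut a x) < \<infinity>
        \<and> hs_norm (commut a x) ^ 2 \<le> 2 * hs_norm (\<lambda>i k. x i k - Psi a x i k) * hs_norm x
        \<and> hs_norm (\<lambda>i k. Psi a x i k - x i k) \<le> hs_norm (commut a x)"
  proof (intro allI impI conjI)
    fix x :: "'i \<Rightarrow> 'i \<Rightarrow> complex" assume "is_HS x"
    hence x: "ell2 (unc x)" by (simp add: is_HS_iff)
    show "hs2 (commut a x) < \<infinity>" using hs2_finite_iff commut_props(1)[OF bdd sum1 sum2 x] by blast
    show "hs_norm (commut a x) ^ 2 \<le> 2 * hs_norm (\<lambda>i k. x i k - Psi a x i k) * hs_norm x"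
      by (rule part2a[OF bdd sum1 sum2 x])
    show "hs_norm (\<lambda>i k. Psi a x i k - x i k) \<le> hs_norm (commut a x)"
      by (rule part2b[OF bdd sum1 sum2 x])
  qed
  have P3: "(\<not> HS_invertible (\<lambda>x i k. Psi a x i k - x i k)) \<longleftrightarrow>
        (\<exists>xs :: nat \<Rightarrow> 'i \<Rightarrow> 'i \<Rightarrow> complex.
           (\<forall>n. is_HS (xs n) \<and> adj (xs n) = xs n \<and> hs_norm (xs n) = 1) \<and>
           (\<lambda>n. hs_norm (\<lambda>i k. Psi a (xs n) i k - xs n i k)) \<longlonglongrightarrow> 0)"
    by (rule part3[OF bdd sum1 sum2])
  show ?thesis using P1 P2 P3 by blast
qed

end
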